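(* Let $W\in\mathbb{C}[x_1,\dots,x_n]$ be a nondegenerate quasihomogeneous polynomial and $G$ a finite subgroup of $G_W$. Then $P(W,G;u,v)=P(W,G;v,u)$; equivalently $h^{p,q}(W,G)=h^{q,p}(W,G)$ for all $p,q\in\mathbb{Q}$.
   Context: Setting: $W$ quasihomogeneous with positive integers $w_i,d$, $W(\lambda^{w_1}x_1,\dots,\lambda^{w_n}x_n)=\lambda^dW$, charges $q_i=w_i/d$; nondegenerate means $\mathbb{C}[x]/(\partial_iW)$ is finite dimensional; $\operatorname{charge}(f)$ is the charge-weighted degree. $\mathrm{GL}_n(\mathbb{C})$ acts on $V=\bigoplus\mathbb{C}x_i$ by $g\cdot x_i=\sum_jg_{ij}x_j$ and on polynomials by substitution. $G_W=\{g: g\cdot W=W,\ g_{ij}=0 \text{ if } w_i\neq w_j\}$. $\operatorname{age}(g)=\frac1{2\pi i}\sum\log\lambda_k$ over eigenvalues of $g$, $\log z\in2\pi i[0,1)$ for $|z|=1$. For $g\in G$: eigenbasis $y_1,\dots,y_n$ of $g$ with eigenvalues $\lambda_i$, $y_i$ of charge $q_i$; $V^g=\ker(E_n-g)$, $n_g=\dim V^g$, $I^g=\{i:\lambda_i=1\}=\{i_1,\dots,i_{n_g}\}$, $R^g=\mathbb{C}[y_i:i\in I^g]$, $W^g$ = $W$ in the $y$'s with $y_i=0$ for $i\notin I^g$, $I_{\nabla W^g}=(\partial W^g/\partial y_i)_{i\in I^g}$; $C_G(g)$ acts via restriction to $V^g$. $\Omega_g=\mathbb{C}\,dy_{i_1}\wedge\dots\wedge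 dy_{i_{n_g}}$ with $h$ acting by $\det(h|_{V^g})$; if $n_g=0$ all are trivial modules $\mathbb{C}$. $\mathcal{Q}_{W,g}=R^g/I_{\nabla W^g}\otimes\Omega_g$, with left charge $\operatorname{charge}(f)+\operatorname{age}(g)-\sum_{\lambda_i\ne1}q_i$ and right charge $\operatorname{charge}(f)+\operatorname{age}(g^{-1})-\sum_{\lambda_i\ne1}q_i$; $\mathscr{H}_{W,G,g}=\mathcal{Q}_{W,g}^{C_G(g)}$. $\mathscr{H}_{W,G}=\bigoplus_{g\in S}\mathscr{H}_{W,G,g}$ over a set $S$ of conjugacy class representatives; $h^{p,q}(W,G)=\dim\mathscr{H}^{p,q}_{W,G}$ and $P(W,G;u,v)=\sum_{p,q\in\mathbb{Q}}h^{p,q}(W,G)u^pv^q$. *)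

theory Defs
  imports "HOL-Library.Function_Algebras" "HOL-Analysis.Complex_Transcendental"
    "Jordan_Normal_Form.Char_Poly" "Jordan_Normal_Form.Determinant"
begin

text \<open>Points of the affine space are vectors \<open>nat \<Rightarrow> complex\<close>; polynomials over \<open>\<complex>\<close>
  are represented by their polynomial functions (over the infinite field \<open>\<complex>\<close> this is
  the polynomial ring).\<close>

definition poly_fun :: "nat set \<Rightarrow> ((nat \<Rightarrow> complex) \<Rightarrow> complex) \<Rightarrow> bool" where
  "poly_fun I f \<longleftrightarrow> (\<exists>M c. finite M \<and> (\<forall>m\<in>M. \<forall>i. i \<notin> I \<longrightarrow> m i = 0) \<and>
      f = (\<lambda>a. \<Sum>m\<in>M. c m * (\<Prod>i\<in>I. a i ^ m i)))"

definition pderiv_var :: "nat \<Rightarrow> ((nat \<Rightarrow> complex) \<Rightarrow> complex) \<Rightarrow> (nat \<Rightarrow> complex) \<Rightarrow> complex" where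
  "pderiv_var i F a = deriv (\<lambda>t. F (a(i := t))) (a i)"

definition jac_ideal :: "nat set \<Rightarrow> ((nat \<Rightarrow> complex) \<Rightarrow> complex) \<Rightarrow> ((nat \<Rightarrow> complex) \<Rightarrow> complex) set" where
  "jac_ideal I F = {f. \<exists>r. (\<forall>i\<in>I. poly_fun I (r i)) \<and>
      f = (\<lambda>a. \<Sum>i\<in>I. r i a * pderiv_var i F a)}"

definition fscale :: "complex \<Rightarrow> ((nat \<Rightarrow> complex) \<Rightarrow> complex) \<Rightarrow> ((nat \<Rightarrow> complex) \<Rightarrow> complex)" where
  "fscale c f = (\<lambda>a. c * f a)"

definition cdim :: "((nat \<Rightarrow> complex) \<Rightarrow> complex) set \<Rightarrow> nat" where
  "cdim S = vector_space.dim fscale S"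

text \<open>Nondegeneracy: \<open>\<complex>[x_1,\<dots>,x_n]/(\<partial>_i W)\<close> is finite dimensional, i.e. spanned by the
  classes of finitely many polynomials.\<close>
definition nondegenerate :: "nat \<Rightarrow> ((nat \<Rightarrow> complex) \<Rightarrow> complex) \<Rightarrow> bool" where
  "nondegenerate n W \<longleftrightarrow> (\<exists>B. finite B \<and> (\<forall>b\<in>B. poly_fun {..<n} b) \<and>
      (\<forall>f. poly_fun {..<n} f \<longrightarrow>
         (\<exists>c. (\<lambda>a. f a - (\<Sum>b\<in>B. c b * b a)) \<in> jac_ideal {..<n} W)))"

definition wscale :: "(nat \<Rightarrow> nat) \<Rightarrow> complex \<Rightarrow> (nat \<Rightarrow> complex) \<Rightarrow> (nat \<Rightarrow> complex)" where
  "wscale w l a = (\<lambda>i. l ^ w i * a i)"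

definition whom :: "(nat \<Rightarrow> nat) \<Rightarrow> nat \<Rightarrow> ((nat \<Rightarrow> complex) \<Rightarrow> complex) \<Rightarrow> bool" where
  "whom w k f \<longleftrightarrow> (\<forall>l a. f (wscale w l a) = l ^ k * f a)"

definition quasihomogeneous :: "nat \<Rightarrow> (nat \<Rightarrow> nat) \<Rightarrow> nat \<Rightarrow> ((nat \<Rightarrow> complex) \<Rightarrow> complex) \<Rightarrow> bool" where
  "quasihomogeneous n w d W \<longleftrightarrow> poly_fun {..<n} W \<and> (\<forall>i<n. 0 < w i) \<and> 0 < d \<and> whom w d W"

text \<open>A function is homogeneous of charge \<open>c\<close> (charge = weighted degree / \<open>d\<close>); \<open>0\<close> has every charge.\<close>
definition has_charge :: "(nat \<Rightarrow> nat) \<Rightarrow> nat \<Rightarrow> real \<Rightarrow> ((nat \<Rightarrow> complex) \<Rightarrow> complex) \<Rightarrow> bool" where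
  "has_charge w d c f \<longleftrightarrow> f = (\<lambda>_. 0) \<or> (\<exists>k::nat. real k = c * real d \<and> whom w k f)"

text \<open>Linear action of an \<open>n \<times> n\<close> matrix: \<open>g\<cdot>x_i = \<Sum>_j g_{ij} x_j\<close>, so
  \<open>(g\<cdot>f)(a) = f(g a)\<close>.\<close>
definition mact :: "nat \<Rightarrow> complex mat \<Rightarrow> (nat \<Rightarrow> complex) \<Rightarrow> (nat \<Rightarrow> complex)" where
  "mact n g a = (\<lambda>i. if i < n then (\<Sum>j<n. g $$ (i, j) * a j) else 0)"

definition G_W :: "nat \<Rightarrow> (nat \<Rightarrow> nat) \<Rightarrow> ((nat \<Rightarrow> complex) \<Rightarrow> complex) \<Rightarrow> complex mat set" where
  "G_W n w W = {g. g \<in> carrier_mat n n \<and> invertible_mat g \<and> (\<forall>a. W (mact n g a) = W a) \<and>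
      (\<forall>i<n. \<forall>j<n. w i \<noteq> w j \<longrightarrow> g $$ (i, j) = 0)}"

definition finite_mat_group :: "nat \<Rightarrow> complex mat set \<Rightarrow> bool" where
  "finite_mat_group n G \<longleftrightarrow> finite G \<and> G \<subseteq> carrier_mat n n \<and> 1\<^sub>m n \<in> G \<and>
     (\<forall>g\<in>G. \<forall>h\<in>G. g * h \<in> G) \<and> (\<forall>g\<in>G. \<exists>h\<in>G. g * h = 1\<^sub>m n)"

definition ginv :: "nat \<Rightarrow> complex mat set \<Rightarrow> complex mat \<Rightarrow> complex mat" where
  "ginv n G g = (THE h. h \<in> G \<and> g * h = 1\<^sub>m n)"

definition centralizer :: "complex mat set \<Rightarrow> complex mat \<Rightarrow> complex mat set" where
  "centralizer G g = {h \<in> G. h * g = g * h}"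

text \<open>Age: \<open>\<Sum> log \<lambda>_k / 2\<pi>i\<close> over the eigenvalues with (algebraic) multiplicity,
  \<open>log z \<in> 2\<pi>i[0,1)\<close> on the unit circle.\<close>
definition age :: "complex mat \<Rightarrow> real" where
  "age g = (\<Sum>l\<in>{l. poly (char_poly g) l = 0}.
              real (order l (char_poly g)) * frac (Arg l / (2 * pi)))"

text \<open>Eigendata of \<open>g\<close>: \<open>y_i = \<Sum>_j P_{ij} x_j\<close> with \<open>g\<cdot>y_i = \<lambda>_i y_i\<close> (i.e. \<open>P g = diag(\<lambda>) P\<close>),
  \<open>Q = P^{-1}\<close>, and \<open>y_i\<close> of charge \<open>q_i\<close> (\<open>P_{ij} = 0\<close> unless \<open>w_i = w_j\<close>).\<close>
definition eigendata :: "nat \<Rightarrow> (nat \<Rightarrow> nat) \<Rightarrow> complex mat \<Rightarrow>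
    complex mat \<times> complex mat \<times> (nat \<Rightarrow> complex) \<Rightarrow> bool" where
  "eigendata n w g D \<longleftrightarrow> (case D of (P, Q, lam) \<Rightarrow>
     P \<in> carrier_mat n n \<and> Q \<in> carrier_mat n n \<and> P * Q = 1\<^sub>m n \<and> Q * P = 1\<^sub>m n \<and>
     P * g = mat n n (\<lambda>(i, j). if i = j then lam i else 0) * P \<and>
     (\<forall>i<n. \<forall>j<n. w i \<noteq> w j \<longrightarrow> P $$ (i, j) = 0))"

definition eig :: "nat \<Rightarrow> (nat \<Rightarrow> nat) \<Rightarrow> complex mat \<Rightarrow> complex mat \<times> complex mat \<times> (nat \<Rightarrow> complex)" where
  "eig n w g = (SOME D. eigendata n w g D)"

definition eigP where "eigP n w g = fst (eig n w g)"
definition eigQ where "eigQ n w g = fst (snd (eig n w g))"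
definition eiglam where "eiglam n w g = snd (snd (eig n w g))"

definition fixidx :: "nat \<Rightarrow> (nat \<Rightarrow> nat) \<Rightarrow> complex mat \<Rightarrow> nat set" where
  "fixidx n w g = {i. i < n \<and> eiglam n w g i = 1}"

text \<open>\<open>W^g\<close>: \<open>W\<close> written in the \<open>y\<close>-coordinates (\<open>x = Q y\<close>) with \<open>y_i = 0\<close> for \<open>i \<notin> I^g\<close>.\<close>
definition Wfix :: "nat \<Rightarrow> (nat \<Rightarrow> nat) \<Rightarrow> ((nat \<Rightarrow> complex) \<Rightarrow> complex) \<Rightarrow> complex mat \<Rightarrow>
    (nat \<Rightarrow> complex) \<Rightarrow> complex" where
  "Wfix n w W g b = W (mact n (eigQ n w g) (\<lambda>i. if i \<in> fixidx n w g then b i else 0))"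

text \<open>Action of \<open>h \<in> C_G(g)\<close> on \<open>R^g\<close> (restriction to \<open>V^g\<close>, in the \<open>y\<close>-basis: matrix
  \<open>P h P^{-1}\<close>) and \<open>det(h|_{V^g})\<close>.\<close>
definition ymat :: "nat \<Rightarrow> (nat \<Rightarrow> nat) \<Rightarrow> complex mat \<Rightarrow> complex mat \<Rightarrow> complex mat" where
  "ymat n w g h = eigP n w g * h * eigQ n w g"

definition det_fix :: "nat \<Rightarrow> (nat \<Rightarrow> nat) \<Rightarrow> complex mat \<Rightarrow> complex mat \<Rightarrow> complex" where
  "det_fix n w g h = (let I = sorted_list_of_set (fixidx n w g); k = length I in
     det (mat k k (\<lambda>(a, b). ymat n w g h $$ (I ! a, I ! b))))"

definition shift :: "nat \<Rightarrow> (nat \<Rightarrow> nat) \<Rightarrow> nat \<Rightarrow> complex mat \<Rightarrow> real" where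
  "shift n w d g = (\<Sum>i\<in>{i. i < n \<and> eiglam n w g i \<noteq> 1}. real (w i) / real d)"

text \<open>Charge-\<open>c\<close> part of \<open>R^g\<close>, of the Jacobian ideal, and the preimage of the
  \<open>C_G(g)\<close>-invariants of \<open>\<Q>_{W,g} = R^g/I_{\<nabla>W^g} \<otimes> \<Omega>_g\<close>.\<close>
definition Rc where
  "Rc n w d g c = {f. poly_fun (fixidx n w g) f \<and> has_charge w d c f}"

definition Jc where
  "Jc n w d W g c = Rc n w d g c \<inter> jac_ideal (fixidx n w g) (Wfix n w W g)"

definition InvPre where
  "InvPre n w d W G g c = {f \<in> Rc n w d g c. \<forall>h\<in>centralizer G g.
      (\<lambda>b. det_fix n w g h * f (mact n (ymat n w g h) b) - f b)
        \<in> jac_ideal (fixidx n w g) (Wfix n w W g)}"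

text \<open>\<open>dim (\<Q>_{W,g})^{C_G(g)}\<close> in (left) charge coming from polynomial charge \<open>c\<close>.\<close>
definition Hdim where
  "Hdim n w d W G g c = cdim (InvPre n w d W G g c) - cdim (Jc n w d W g c)"

definition conj_reps :: "nat \<Rightarrow> complex mat set \<Rightarrow> complex mat set \<Rightarrow> bool" where
  "conj_reps n G S \<longleftrightarrow> S \<subseteq> G \<and>
     (\<forall>g\<in>G. \<exists>!s. s \<in> S \<and> (\<exists>k\<in>G. g = k * s * ginv n G k))"

text \<open>\<open>h^{p,q}(W,G)\<close>: element \<open>f \<otimes> \<omega>\<close> in sector \<open>g\<close> with \<open>charge f = c\<close> has left charge
  \<open>c + age g - shift\<close> and right charge \<open>c + age g\<^sup>-\<^sup>1 - shift\<close>.\<close>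
definition hpq :: "nat \<Rightarrow> (nat \<Rightarrow> nat) \<Rightarrow> nat \<Rightarrow> ((nat \<Rightarrow> complex) \<Rightarrow> complex) \<Rightarrow>
    complex mat set \<Rightarrow> real \<Rightarrow> real \<Rightarrow> nat" where
  "hpq n w d W G p q = (\<Sum>g\<in>(SOME S. conj_reps n G S).
     (if q - p = age (ginv n G g) - age g
      then Hdim n w d W G g (p - age g + shift n w d g) else 0))"

end

theory Submission
  imports Defs "Jordan_Normal_Form.Jordan_Normal_Form_Existence"
begin


definition mono :: "nat set \<Rightarrow> (nat \<Rightarrow> nat) \<Rightarrow> (nat \<Rightarrow> complex) \<Rightarrow> complex" where
  "mono I m a = (\<Prod>i\<in>I. a i ^ m i)"

lemma poly_fun_alt: "poly_fun I f \<longleftrightarrow> (\<exists>M c. finite M \<and> (\<forall>m\<in>M. \<forall>i. i \<notin> I \<longrightarrow> m i = 0) \<and>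
      f = (\<lambda>a. \<Sum>m\<in>M. c m * mono I m a))"
  unfolding poly_fun_def mono_def by simp

lemma poly_fun_const: "poly_fun I (\<lambda>_. c)"
  unfolding poly_fun_alt
  by (rule exI[of _ "{\<lambda>_. 0}"], rule exI[of _ "\<lambda>_. c"], auto simp: mono_def)

lemma poly_fun_var: assumes "finite I" "i \<in> I" shows "poly_fun I (\<lambda>a. a i)"
  unfolding poly_fun_alt
proof (rule exI[of _ "{\<lambda>j. if j = i then 1 else 0}"], rule exI[of _ "\<lambda>_. 1"], intro conjI)
  have "\<And>a. mono I (\<lambda>j. if j = i then 1 else 0) a = a i"
  proof -
    fix a :: "nat \<Rightarrow> complex"
    have "mono I (\<lambda>j. if j = i then 1 else 0) a = (\<Prod>j\<in>I. if j = i then a j else 1)"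
      unfolding mono_def by (rule prod.cong) auto
    also have "\<dots> = a i" using assms by (simp add: prod.delta')
    finally show "mono I (\<lambda>j. if j = i then 1 else 0) a = a i" .
  qed
  then show "(\<lambda>a. a i) = (\<lambda>a. \<Sum>m\<in>{\<lambda>j. if j = i then 1 else 0}. 1 * mono I m a)" by simp
qed (use assms in auto)

lemma sum_if_subset: "finite B \<Longrightarrow> A \<subseteq> B \<Longrightarrow> (\<Sum>x\<in>B. if x \<in> A then f x else 0) = (\<Sum>x\<in>A. f x)"
  by (simp add: sum.If_cases Int_absorb1)

lemma poly_fun_add: assumes "poly_fun I f" "poly_fun I g" shows "poly_fun I (\<lambda>a. f a + g a)"
proof -
  obtain M1 c1 where 1: "finite M1" "\<forall>m\<in>M1. \<forall>i. i \<notin> I \<longrightarrow> m i = 0" "f = (\<lambda>a. \<Sum>m\<in>M1. c1 m * mono I m a)"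
    using assms(1) unfolding poly_fun_alt by blast
  obtain M2 c2 where 2: "finite M2" "\<forall>m\<in>M2. \<forall>i. i \<notin> I \<longrightarrow> m i = 0" "g = (\<lambda>a. \<Sum>m\<in>M2. c2 m * mono I m a)"
    using assms(2) unfolding poly_fun_alt by blast
  let ?c = "\<lambda>m. (if m \<in> M1 then c1 m else 0) + (if m \<in> M2 then c2 m else 0)"
  have "(\<lambda>a. f a + g a) = (\<lambda>a. \<Sum>m\<in>M1 \<union> M2. ?c m * mono I m a)"
  proof
    fix a
    have "(\<Sum>m\<in>M1 \<union> M2. ?c m * mono I m a) = (\<Sum>m\<in>M1 \<union> M2. (if m \<in> M1 then c1 m * mono I m a else 0))
       + (\<Sum>m\<in>M1 \<union> M2. (if m \<in> M2 then c2 m * mono I m a else 0))"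
      by (simp only: sum.distrib[symmetric]) (rule sum.cong, simp, simp add: distrib_right)
    also have "\<dots> = f a + g a" using 1 2 by (simp add: sum_if_subset)
    finally show "f a + g a = (\<Sum>m\<in>M1 \<union> M2. ?c m * mono I m a)" by simp
  qed
  then show ?thesis unfolding poly_fun_alt
    by (intro exI[of _ "M1 \<union> M2"] exI[of _ ?c] conjI) (use 1 2 in auto)
qed

lemma mono_add: "mono I (\<lambda>i. m1 i + m2 i) a = mono I m1 a * mono I m2 a"
  unfolding mono_def by (simp add: power_add prod.distrib)

lemma poly_fun_mult: assumes "poly_fun I f" "poly_fun I g" shows "poly_fun I (\<lambda>a. f a * g a)"
proof -
  obtain M1 c1 where 1: "finite M1" "\<forall>m\<in>M1. \<forall>i. i \<notin> I \<longrightarrow> m i = 0" "f = (\<lambda>a. \<Sum>m\<in>M1. c1 m * mono I m a)"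
    using assms(1) unfolding poly_fun_alt by blast
  obtain M2 c2 where 2: "finite M2" "\<forall>m\<in>M2. \<forall>i. i \<notin> I \<longrightarrow> m i = 0" "g = (\<lambda>a. \<Sum>m\<in>M2. c2 m * mono I m a)"
    using assms(2) unfolding poly_fun_alt by blast
  let ?s = "\<lambda>p. (\<lambda>i. fst p i + snd p i :: nat)"
  let ?M = "?s ` (M1 \<times> M2)"
  let ?c = "\<lambda>m. \<Sum>p\<in>{p\<in>M1 \<times> M2. ?s p = m}. c1 (fst p) * c2 (snd p)"
  have fin: "finite (M1 \<times> M2)" using 1 2 by auto
  have "(\<lambda>a. f a * g a) = (\<lambda>a. \<Sum>m\<in>?M. ?c m * mono I m a)"
  proof
    fix a
    have "(\<Sum>m\<in>?M. ?c m * mono I m a) = (\<Sum>m\<in>?M. \<Sum>p\<in>{p\<in>M1 \<times> M2. ?s p = m}. c1 (fst p) * c2 (snd p) * mono I (?s p) a)"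
      by (simp add: sum_distrib_right)
    also have "\<dots> = (\<Sum>p\<in>M1 \<times> M2. c1 (fst p) * c2 (snd p) * mono I (?s p) a)"
      using sum.group[OF fin finite_imageI[OF fin] subset_refl, of "\<lambda>p. c1 (fst p) * c2 (snd p) * mono I (?s p) a" ?s] by simp
    also have "\<dots> = (\<Sum>p\<in>M1 \<times> M2. (c1 (fst p) * mono I (fst p) a) * (c2 (snd p) * mono I (snd p) a))"
      by (simp add: mono_add mult_ac)
    also have "\<dots> = f a * g a" unfolding 1(3) 2(3) by (simp add: sum_product sum.cartesian_product split_def)
    finally show "f a * g a = (\<Sum>m\<in>?M. ?c m * mono I m a)" by simp
  qed
  moreover have "\<forall>m\<in>?M. \<forall>i. i \<notin> I \<longrightarrow> m i = 0" using 1 2 by auto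
  ultimately show ?thesis unfolding poly_fun_alt
    by (intro exI[of _ ?M] exI[of _ ?c] conjI) (use fin in auto)
qed

inductive pf :: "nat set \<Rightarrow> ((nat \<Rightarrow> complex) \<Rightarrow> complex) \<Rightarrow> bool" for I where
  pf_const: "pf I (\<lambda>_. c)"
| pf_var: "i \<in> I \<Longrightarrow> pf I (\<lambda>a. a i)"
| pf_add: "pf I f \<Longrightarrow> pf I g \<Longrightarrow> pf I (\<lambda>a. f a + g a)"
| pf_mult: "pf I f \<Longrightarrow> pf I g \<Longrightarrow> pf I (\<lambda>a. f a * g a)"

lemma pf_poly_fun: "pf I f \<Longrightarrow> finite I \<Longrightarrow> poly_fun I f"
  by (induction rule: pf.induct) (auto intro: poly_fun_const poly_fun_var poly_fun_add poly_fun_mult)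

lemma pf_sum: "finite X \<Longrightarrow> (\<And>x. x \<in> X \<Longrightarrow> pf I (f x)) \<Longrightarrow> pf I (\<lambda>a. \<Sum>x\<in>X. f x a)"
proof (induction X rule: finite_induct)
  case empty then show ?case using pf_const[of I 0] by simp
next
  case (insert x F) then show ?case using pf_add[of I "f x" "\<lambda>a. \<Sum>x\<in>F. f x a"] by simp
qed

lemma pf_prod: "finite X \<Longrightarrow> (\<And>x. x \<in> X \<Longrightarrow> pf I (f x)) \<Longrightarrow> pf I (\<lambda>a. \<Prod>x\<in>X. f x a)"
proof (induction X rule: finite_induct)
  case empty then show ?case using pf_const[of I 1] by simp
next
  case (insert x F) then show ?case using pf_mult[of I "f x" "\<lambda>a. \<Prod>x\<in>F. f x a"] by simp
qed

lemma pf_power: "pf I f \<Longrightarrow> pf I (\<lambda>a. f a ^ k)"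
  by (induction k) (auto intro: pf_const pf_mult)

lemma poly_fun_pf: assumes "poly_fun I f" shows "pf I f"
proof -
  obtain M c where 1: "finite M" "f = (\<lambda>a. \<Sum>m\<in>M. c m * mono I m a)"
    using assms unfolding poly_fun_alt by blast
  show ?thesis unfolding 1(2)
  proof (rule pf_sum[OF 1(1)])
    fix m
    show "pf I (\<lambda>a. c m * mono I m a)"
    proof (cases "finite I")
      case True
      show ?thesis unfolding mono_def
        by (rule pf_mult[OF pf_const pf_prod[OF True]]) (auto intro: pf_power pf_var)
    next
      case False then show ?thesis unfolding mono_def using pf_const[of I "c m"] by simp
    qed
  qed
qed

lemma poly_fun_sum: "finite I \<Longrightarrow> finite X \<Longrightarrow> (\<And>x. x \<in> X \<Longrightarrow> poly_fun I (f x)) \<Longrightarrow> poly_fun I (\<lambda>a. \<Sum>x\<in>X. f x a)"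
  by (rule pf_poly_fun[OF pf_sum]) (auto intro: poly_fun_pf)

lemma poly_fun_comp: assumes "finite I" "poly_fun J f" "\<And>i. i \<in> J \<Longrightarrow> poly_fun I (\<lambda>b. \<phi> b i)"
  shows "poly_fun I (\<lambda>b. f (\<phi> b))"
proof -
  have "pf J f" by (rule poly_fun_pf[OF assms(2)])
  then have "pf I (\<lambda>b. f (\<phi> b))"
    by (induction rule: pf.induct) (auto intro: pf.intros poly_fun_pf assms(3))
  then show ?thesis using pf_poly_fun assms(1) by blast
qed

definition dep :: "nat set \<Rightarrow> ((nat \<Rightarrow> complex) \<Rightarrow> complex) \<Rightarrow> bool" where
  "dep I f \<longleftrightarrow> (\<forall>a b. (\<forall>i\<in>I. a i = b i) \<longrightarrow> f a = f b)"

lemma poly_fun_dep: assumes "poly_fun I f" shows "dep I f"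
proof -
  obtain M c where 1: "f = (\<lambda>a. \<Sum>m\<in>M. c m * mono I m a)"
    using assms unfolding poly_fun_alt by blast
  show ?thesis unfolding dep_def 1 mono_def by (auto intro!: sum.cong prod.cong)
qed



definition Dprop :: "nat set \<Rightarrow> ((nat \<Rightarrow> complex) \<Rightarrow> complex) \<Rightarrow> bool" where
  "Dprop I F \<longleftrightarrow> (\<forall>a v t. ((\<lambda>s. F (\<lambda>i. a i + s * v i)) has_field_derivative
     (\<Sum>i\<in>I. v i * pderiv_var i F (\<lambda>i. a i + t * v i))) (at t))"

lemma Dprop_partial:
  assumes "Dprop I F" "i \<in> I" "finite I"
  shows "((\<lambda>s. F (x(i := s))) has_field_derivative pderiv_var i F (x(i := s0))) (at s0)"
proof -
  let ?a = "x(i := 0)" and ?v = "\<lambda>j. if j = i then 1 else (0::complex)"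
  have e: "\<And>s. (\<lambda>j. ?a j + s * ?v j) = x(i := s)" by auto
  have "((\<lambda>s. F (\<lambda>j. ?a j + s * ?v j)) has_field_derivative
     (\<Sum>j\<in>I. ?v j * pderiv_var j F (\<lambda>j. ?a j + s0 * ?v j))) (at s0)"
    using assms(1)[unfolded Dprop_def, rule_format, of ?a ?v s0] .
  moreover have "(\<Sum>j\<in>I. ?v j * pderiv_var j F (\<lambda>j. ?a j + s0 * ?v j)) = pderiv_var i F (x(i := s0))"
  proof -
    have "\<And>j. ?v j * pderiv_var j F (x(i := s0)) = (if j = i then pderiv_var i F (x(i := s0)) else 0)" by simp
    then show ?thesis unfolding e using assms(2,3) by (simp add: sum.delta)
  qed
  ultimately show ?thesis unfolding e by simp
qed

lemma Dprop_pderiv: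
  assumes "Dprop I F" "i \<in> I" "finite I"
  shows "((\<lambda>s. F (x(i := s))) has_field_derivative pderiv_var i F x) (at (x i))"
  using Dprop_partial[OF assms, of x "x i"] by simp

lemma pderiv_const: "pderiv_var i (\<lambda>_. c) x = 0"
  unfolding pderiv_var_def by simp

lemma pderiv_var_var: "pderiv_var i (\<lambda>a. a k) x = (if i = k then 1 else 0)"
  unfolding pderiv_var_def by (cases "i = k") auto

lemma Dprop_const: "Dprop I (\<lambda>_. c)"
  unfolding Dprop_def pderiv_const by simp

lemma Dprop_var: "finite I \<Longrightarrow> k \<in> I \<Longrightarrow> Dprop I (\<lambda>a. a k)"
  unfolding Dprop_def pderiv_var_var
  by (auto simp: if_distrib sum.delta cong: if_cong intro!: derivative_eq_intros)

lemma Dprop_add: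
  assumes "finite I" "Dprop I F" "Dprop I G"
  shows "Dprop I (\<lambda>a. F a + G a)"
proof -
  have pd: "pderiv_var i (\<lambda>a. F a + G a) x = pderiv_var i F x + pderiv_var i G x" if "i \<in> I" for i x
  proof -
    have "((\<lambda>s. F (x(i := s)) + G (x(i := s))) has_field_derivative pderiv_var i F x + pderiv_var i G x) (at (x i))"
      by (rule DERIV_add; rule Dprop_pderiv) (use assms that in auto)
    then show ?thesis unfolding pderiv_var_def by (rule DERIV_imp_deriv)
  qed
  show ?thesis unfolding Dprop_def
  proof (intro allI)
    fix a v t
    have "((\<lambda>s. F (\<lambda>i. a i + s * v i) + G (\<lambda>i. a i + s * v i)) has_field_derivative
      (\<Sum>i\<in>I. v i * pderiv_var i F (\<lambda>i. a i + t * v i)) + (\<Sum>i\<in>I. v i * pderiv_var i G (\<lambda>i. a i + t * v i))) (at t)"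
      by (rule DERIV_add) (use assms(2,3) in \<open>auto simp: Dprop_def\<close>)
    also have "(\<Sum>i\<in>I. v i * pderiv_var i F (\<lambda>i. a i + t * v i)) + (\<Sum>i\<in>I. v i * pderiv_var i G (\<lambda>i. a i + t * v i))
       = (\<Sum>i\<in>I. v i * pderiv_var i (\<lambda>a. F a + G a) (\<lambda>i. a i + t * v i))"
      unfolding sum.distrib[symmetric] by (rule sum.cong[OF refl]) (simp add: pd distrib_left)
    finally show "((\<lambda>s. F (\<lambda>i. a i + s * v i) + G (\<lambda>i. a i + s * v i)) has_field_derivative
      (\<Sum>i\<in>I. v i * pderiv_var i (\<lambda>a. F a + G a) (\<lambda>i. a i + t * v i))) (at t)" .
  qed
qed

lemma Dprop_mult:
  assumes "finite I" "Dprop I F" "Dprop I G"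
  shows "Dprop I (\<lambda>a. F a * G a)"
proof -
  have pd: "pderiv_var i (\<lambda>a. F a * G a) x = pderiv_var i F x * G x + F x * pderiv_var i G x" if "i \<in> I" for i x
  proof -
    have dF: "((\<lambda>s. F (x(i := s))) has_field_derivative pderiv_var i F x) (at (x i))"
      by (rule Dprop_pderiv) (use assms that in auto)
    have dG: "((\<lambda>s. G (x(i := s))) has_field_derivative pderiv_var i G x) (at (x i))"
      by (rule Dprop_pderiv) (use assms that in auto)
    have "((\<lambda>s. F (x(i := s)) * G (x(i := s))) has_field_derivative
       pderiv_var i F x * G x + F x * pderiv_var i G x) (at (x i))"
      using DERIV_mult'[OF dF dG] by (simp add: mult_ac add_ac)
    then show ?thesis unfolding pderiv_var_def by (simp add: DERIV_imp_deriv)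
  qed
  show ?thesis unfolding Dprop_def
  proof (intro allI)
    fix a v :: "nat \<Rightarrow> complex" and t :: complex
    let ?p = "\<lambda>i. a i + t * v i"
    have dF: "((\<lambda>s. F (\<lambda>i. a i + s * v i)) has_field_derivative (\<Sum>i\<in>I. v i * pderiv_var i F ?p)) (at t)"
      using assms(2) unfolding Dprop_def by blast
    have dG: "((\<lambda>s. G (\<lambda>i. a i + s * v i)) has_field_derivative (\<Sum>i\<in>I. v i * pderiv_var i G ?p)) (at t)"
      using assms(3) unfolding Dprop_def by blast
    have "((\<lambda>s. F (\<lambda>i. a i + s * v i) * G (\<lambda>i. a i + s * v i)) has_field_derivative
      F ?p * (\<Sum>i\<in>I. v i * pderiv_var i G ?p) + (\<Sum>i\<in>I. v i * pderiv_var i F ?p) * G ?p) (at t)"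
      by (rule DERIV_mult'[OF dF dG])
    also have "F ?p * (\<Sum>i\<in>I. v i * pderiv_var i G ?p) + (\<Sum>i\<in>I. v i * pderiv_var i F ?p) * G ?p
       = (\<Sum>i\<in>I. v i * pderiv_var i (\<lambda>a. F a * G a) ?p)"
      unfolding sum_distrib_left sum_distrib_right sum.distrib[symmetric]
      by (rule sum.cong[OF refl]) (simp add: pd algebra_simps)
    finally show "((\<lambda>s. F (\<lambda>i. a i + s * v i) * G (\<lambda>i. a i + s * v i)) has_field_derivative
      (\<Sum>i\<in>I. v i * pderiv_var i (\<lambda>a. F a * G a) ?p)) (at t)" .
  qed
qed

lemma poly_fun_Dprop: assumes "finite I" "poly_fun I F" shows "Dprop I F"
proof -
  have "pf I F" by (rule poly_fun_pf[OF assms(2)])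
  then show ?thesis
    by (induction rule: pf.induct) (auto intro: Dprop_const Dprop_var Dprop_add Dprop_mult assms(1))
qed

lemma mact_upd:
  assumes "j < n"
  shows "mact n L (b(j := t)) = (\<lambda>i. mact n L (b(j := 0)) i + t * (if i < n then L $$ (i, j) else 0))"
proof
  fix i
  show "mact n L (b(j := t)) i = mact n L (b(j := 0)) i + t * (if i < n then L $$ (i, j) else 0)"
  proof (cases "i < n")
    case True
    have "(\<Sum>l<n. L $$ (i, l) * (b(j := t)) l) = (\<Sum>l<n. L $$ (i, l) * (b(j := 0)) l + (if l = j then t * L $$ (i, j) else 0))"
      by (rule sum.cong) auto
    also have "\<dots> = (\<Sum>l<n. L $$ (i, l) * (b(j := 0)) l) + t * L $$ (i, j)"
      using assms by (simp add: sum.distrib)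
    finally show ?thesis using True unfolding mact_def by simp
  qed (simp add: mact_def)
qed

lemma chain_rule:
  assumes "finite J" "J \<subseteq> {..<n}" "poly_fun J F" "j < n"
  shows "pderiv_var j (\<lambda>b. F (mact n L b)) b = (\<Sum>i\<in>J. L $$ (i, j) * pderiv_var i F (mact n L b))"
proof -
  let ?a = "mact n L (b(j := 0))" and ?v = "\<lambda>i. if i < n then L $$ (i, j) else 0"
  have D: "Dprop J F" by (rule poly_fun_Dprop[OF assms(1,3)])
  have e: "(\<lambda>t. F (mact n L (b(j := t)))) = (\<lambda>s. F (\<lambda>i. ?a i + s * ?v i))"
    by (rule ext, subst mact_upd[OF assms(4)], rule refl)
  have "((\<lambda>s. F (\<lambda>i. ?a i + s * ?v i)) has_field_derivative
     (\<Sum>i\<in>J. ?v i * pderiv_var i F (\<lambda>i. ?a i + b j * ?v i))) (at (b j))"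
    using D[unfolded Dprop_def, rule_format, of ?a ?v "b j"] .
  moreover have "(\<lambda>i. ?a i + b j * ?v i) = mact n L b"
    using mact_upd[OF assms(4), of L b "b j"] by (simp del: fun_upd_apply)
  moreover have "(\<Sum>i\<in>J. ?v i * pderiv_var i F (mact n L b)) = (\<Sum>i\<in>J. L $$ (i, j) * pderiv_var i F (mact n L b))"
    using assms(2) by (intro sum.cong) auto
  ultimately have "((\<lambda>s. F (\<lambda>i. ?a i + s * ?v i)) has_field_derivative
     (\<Sum>i\<in>J. L $$ (i, j) * pderiv_var i F (mact n L b))) (at (b j))" by simp
  then have "deriv (\<lambda>t. F (mact n L (b(j := t)))) (b j) = (\<Sum>i\<in>J. L $$ (i, j) * pderiv_var i F (mact n L b))"
    unfolding e by (rule DERIV_imp_deriv)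
  then show ?thesis unfolding pderiv_var_def[of j] by simp
qed



lemma if_one_mult: "(if P then (1::complex) else 0) * x = (if P then x else 0)" by simp
lemma mult_if_delta2: "x * (if P then (y::complex) else 0) = (if P then x * y else 0)" by simp

lemma mult_if_delta1: "(if P then (x::complex) else 0) * y = (if P then x * y else 0)" by simp

lemmas msimp = scalar_prod_def atLeast0LessThan

locale nm = fixes n :: nat
begin
lemma mcn[simp]: "(A :: complex mat) \<in> carrier_mat n n \<Longrightarrow> B \<in> carrier_mat n n \<Longrightarrow> A * B \<in> carrier_mat n n"
  by simp
lemma assoc_n: "(A :: complex mat) \<in> carrier_mat n n \<Longrightarrow> B \<in> carrier_mat n n \<Longrightarrow> C \<in> carrier_mat n n \<Longrightarrow>
  A * B * C = A * (B * C)"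
  by (rule assoc_mult_mat)
lemma one_right_n: "(A :: complex mat) \<in> carrier_mat n n \<Longrightarrow> A * 1\<^sub>m n = A" by (rule right_mult_one_mat)
lemma one_left_n: "(A :: complex mat) \<in> carrier_mat n n \<Longrightarrow> 1\<^sub>m n * A = A" by (rule left_mult_one_mat)
lemmas nsimps = assoc_n one_right_n one_left_n
end


lemma mult_entry: "A \<in> carrier_mat n n \<Longrightarrow> B \<in> carrier_mat n n \<Longrightarrow> i < n \<Longrightarrow> j < n \<Longrightarrow>
  (A * B) $$ (i, j) = (\<Sum>l<n. A $$ (i, l) * B $$ (l, j))"
  by (simp add: scalar_prod_def atLeast0LessThan)

lemma mact_mult:
  assumes "A \<in> carrier_mat n n" "B \<in> carrier_mat n n"
  shows "mact n (A * B) a = mact n A (mact n B a)"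
proof
  fix i show "mact n (A * B) a i = mact n A (mact n B a) i"
  proof (cases "i < n")
    case True
    have "(\<Sum>j<n. (A * B) $$ (i, j) * a j) = (\<Sum>j<n. \<Sum>l<n. A $$ (i, l) * B $$ (l, j) * a j)"
      using assms True by (simp add: msimp sum_distrib_right)
    also have "\<dots> = (\<Sum>l<n. A $$ (i, l) * (\<Sum>j<n. B $$ (l, j) * a j))"
      by (subst sum.swap) (simp add: sum_distrib_left mult_ac)
    finally show ?thesis using True unfolding mact_def by simp
  qed (simp add: mact_def)
qed

lemma mact_one: "mact n (1\<^sub>m n) a = (\<lambda>i. if i < n then a i else 0)"
  unfolding mact_def by (rule ext) (simp add: if_one_mult sum.delta)

definition blk :: "nat \<Rightarrow> (nat \<Rightarrow> nat) \<Rightarrow> complex mat \<Rightarrow> bool" where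
  "blk n w A \<longleftrightarrow> (\<forall>i<n. \<forall>j<n. w i \<noteq> w j \<longrightarrow> A $$ (i, j) = 0)"

lemma blk_mult:
  assumes "A \<in> carrier_mat n n" "B \<in> carrier_mat n n" "blk n w A" "blk n w B"
  shows "blk n w (A * B)"
  unfolding blk_def
proof (intro allI impI)
  fix i j assume ij: "i < n" "j < n" "w i \<noteq> w j"
  have "(A * B) $$ (i, j) = (\<Sum>l<n. A $$ (i, l) * B $$ (l, j))" using assms ij by (simp add: msimp)
  also have "\<dots> = 0"
  proof (rule sum.neutral, intro ballI)
    fix l assume "l \<in> {..<n}"
    then show "A $$ (i, l) * B $$ (l, j) = 0" using assms(3,4) ij unfolding blk_def by (cases "w i = w l") auto
  qed
  finally show "(A * B) $$ (i, j) = 0" .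
qed

definition Dw :: "nat \<Rightarrow> (nat \<Rightarrow> nat) \<Rightarrow> complex mat" where
  "Dw n w = mat n n (\<lambda>(i, j). if i = j then of_nat (w i) else 0)"

lemma Dw_carrier[simp]: "Dw n w \<in> carrier_mat n n" unfolding Dw_def by simp

lemma mult_Dw_right: "A \<in> carrier_mat n n \<Longrightarrow> A * Dw n w = mat n n (\<lambda>(i, j). A $$ (i, j) * of_nat (w j))"
  by (rule eq_matI) (auto simp: msimp Dw_def mult_if_delta2 mult_if_delta1 sum.delta sum.delta')

lemma mult_Dw_left: "A \<in> carrier_mat n n \<Longrightarrow> Dw n w * A = mat n n (\<lambda>(i, j). of_nat (w i) * A $$ (i, j))"
  by (rule eq_matI) (auto simp: msimp Dw_def mult_if_delta2 mult_if_delta1 sum.delta sum.delta')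

lemma blk_iff_Dw: "A \<in> carrier_mat n n \<Longrightarrow> blk n w A \<longleftrightarrow> A * Dw n w = Dw n w * A"
proof -
  assume A: "A \<in> carrier_mat n n"
  have "A * Dw n w = Dw n w * A \<longleftrightarrow> (\<forall>i<n. \<forall>j<n. A $$ (i, j) * of_nat (w j) = of_nat (w i) * A $$ (i, j))"
    unfolding mult_Dw_right[OF A] mult_Dw_left[OF A] by (auto simp: mat_eq_iff)
  also have "\<dots> \<longleftrightarrow> blk n w A" unfolding blk_def by (metis mult.commute mult_cancel_left of_nat_eq_iff)
  finally show ?thesis by simp
qed

lemma (in nm) blk_inv:
  assumes P: "P \<in> carrier_mat n n" and Q: "Q \<in> carrier_mat n n" and PQ: "P * Q = 1\<^sub>m n" and QP: "Q * P = 1\<^sub>m n"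
    and b: "blk n w P"
  shows "blk n w Q"
proof -
  let ?D = "Dw n w"
  have PD: "P * ?D = ?D * P" using blk_iff_Dw[OF P] b by simp
  have "Q * ?D = Q * ?D * (P * Q)" using Q PQ by (simp add: nsimps)
  also have "\<dots> = Q * (P * ?D) * Q" using P Q PD by (simp add: nsimps)
  also have "\<dots> = (Q * P) * ?D * Q" using P Q by (simp add: nsimps)
  also have "\<dots> = ?D * Q" using QP Q by (simp add: nsimps)
  finally show ?thesis using blk_iff_Dw[OF Q] by simp
qed

section \<open>Group facts\<close>

locale fgrp = nm +
  fixes G :: "complex mat set"
  assumes fmg: "finite_mat_group n G"
begin

lemma carr: "g \<in> G \<Longrightarrow> g \<in> carrier_mat n n" using fmg unfolding finite_mat_group_def by auto
lemma one_mem: "1\<^sub>m n \<in> G" using fmg unfolding finite_mat_group_def by auto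
lemma mult_mem: "g \<in> G \<Longrightarrow> h \<in> G \<Longrightarrow> g * h \<in> G" using fmg unfolding finite_mat_group_def by auto
lemma fin: "finite G" using fmg unfolding finite_mat_group_def by auto

lemma inv_ex: "g \<in> G \<Longrightarrow> \<exists>h\<in>G. g * h = 1\<^sub>m n" using fmg unfolding finite_mat_group_def by auto

lemma right_left: "g \<in> G \<Longrightarrow> h \<in> G \<Longrightarrow> g * h = 1\<^sub>m n \<Longrightarrow> h * g = 1\<^sub>m n"
  using mat_mult_left_right_inverse carr by blast

lemma inv_unique:
  assumes "g \<in> G" "h \<in> G" "h' \<in> G" "g * h = 1\<^sub>m n" "g * h' = 1\<^sub>m n"
  shows "h = h'"
proof -
  have "h * g = 1\<^sub>m n" using right_left assms by blast
  have c: "h \<in> carrier_mat n n" "g \<in> carrier_mat n n" "h' \<in> carrier_mat n n" using assms carr by auto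
  have "h = h * (g * h')" using assms c by (simp add: nsimps)
  also have "\<dots> = (h * g) * h'" using c by (simp add: nsimps)
  also have "\<dots> = h'" using \<open>h * g = 1\<^sub>m n\<close> c by (simp add: nsimps)
  finally show ?thesis .
qed

lemma ginv: assumes "g \<in> G"
  shows "ginv n G g \<in> G" "g * ginv n G g = 1\<^sub>m n" "ginv n G g * g = 1\<^sub>m n"
proof -
  obtain h where h: "h \<in> G" "g * h = 1\<^sub>m n" using inv_ex[OF assms] by blast
  have "ginv n G g = h" unfolding ginv_def
    by (rule the_equality) (use h inv_unique assms in blast)+
  then show "ginv n G g \<in> G" "g * ginv n G g = 1\<^sub>m n" "ginv n G g * g = 1\<^sub>m n"
    using h right_left assms by auto
qed

lemma ginv_eq: "g \<in> G \<Longrightarrow> h \<in> G \<Longrightarrow> g * h = 1\<^sub>m n \<Longrightarrow> ginv n G g = h"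
  using inv_unique ginv by blast

lemma ginv_ginv: "g \<in> G \<Longrightarrow> ginv n G (ginv n G g) = g"
  using ginv ginv_eq by blast

lemma ginv_mult: assumes "a \<in> G" "b \<in> G" shows "ginv n G (a * b) = ginv n G b * ginv n G a"
proof (rule ginv_eq)
  show "a * b \<in> G" "ginv n G b * ginv n G a \<in> G" using assms ginv mult_mem by auto
  have c: "a \<in> carrier_mat n n" "b \<in> carrier_mat n n" "ginv n G b \<in> carrier_mat n n" "ginv n G a \<in> carrier_mat n n"
    using assms ginv carr by auto
  have "a * b * (ginv n G b * ginv n G a) = a * (b * ginv n G b) * ginv n G a"
    using c by (simp add: nsimps)
  also have "\<dots> = 1\<^sub>m n" using c ginv assms by (simp add: nsimps)
  finally show "a * b * (ginv n G b * ginv n G a) = 1\<^sub>m n" .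
qed

lemma pow_mem: "g \<in> G \<Longrightarrow> g ^\<^sub>m k \<in> G"
proof (induction k)
  case 0 then show ?case using carr one_mem by auto
next
  case (Suc k) then show ?case using mult_mem by simp
qed

lemma pow_add: "(g :: complex mat) \<in> carrier_mat n n \<Longrightarrow> g ^\<^sub>m (a + b) = g ^\<^sub>m a * g ^\<^sub>m b"
proof (induction b)
  case 0 then show ?case by simp
next
  case (Suc b) then show ?case by (simp add: nsimps)
qed

lemma finite_order: assumes "g \<in> G" shows "\<exists>N>0. g ^\<^sub>m N = 1\<^sub>m n"
proof -
  have "\<not> inj_on (\<lambda>k. g ^\<^sub>m k) {..card G}"
  proof
    assume "inj_on (\<lambda>k. g ^\<^sub>m k) {..card G}"
    then have "card ((\<lambda>k. g ^\<^sub>m k) ` {..card G}) = Suc (card G)" by (simp add: card_image)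
    moreover have "(\<lambda>k. g ^\<^sub>m k) ` {..card G} \<subseteq> G" using pow_mem assms by auto
    ultimately have "Suc (card G) \<le> card G" using card_mono[OF fin] by metis
    then show False by simp
  qed
  then obtain a b where ab: "a < b" "g ^\<^sub>m a = g ^\<^sub>m b"
    unfolding inj_on_def by (metis linorder_neqE_nat)
  let ?h = "ginv n G g ^\<^sub>m a"
  have gc: "g \<in> carrier_mat n n" using carr assms by blast
  have hc: "ginv n G g \<in> carrier_mat n n" using carr ginv assms by blast
  have hg: "?h * g ^\<^sub>m a = 1\<^sub>m n"
  proof (induction a)
    case 0 then show ?case using hc gc by simp
  next
    case (Suc a)
    have "ginv n G g ^\<^sub>m Suc a * g ^\<^sub>m Suc a = ginv n G g ^\<^sub>m a * (ginv n G g * g) * g ^\<^sub>m a"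
    proof -
      have "g ^\<^sub>m Suc a = g * g ^\<^sub>m a" using pow_add[OF gc, of 1 a] gc by simp
      then show ?thesis using hc gc by (simp add: nsimps)
    qed
    also have "\<dots> = 1\<^sub>m n" using ginv(3)[OF assms] Suc hc gc by (simp add: nsimps)
    finally show ?case .
  qed
  have "g ^\<^sub>m b = g ^\<^sub>m a * g ^\<^sub>m (b - a)" using pow_add[OF gc, of a "b - a"] ab by simp
  then have "?h * g ^\<^sub>m a = ?h * g ^\<^sub>m a * g ^\<^sub>m (b - a)" using ab hc gc by (simp add: nsimps)
  then have "g ^\<^sub>m (b - a) = 1\<^sub>m n" using hg gc by (simp add: nsimps)
  then show ?thesis using ab by (intro exI[of _ "b - a"]) auto
qed

end



definition diagm :: "nat \<Rightarrow> (nat \<Rightarrow> complex) \<Rightarrow> complex mat" where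
  "diagm n mu = mat n n (\<lambda>(i, j). if i = j then mu i else 0)"

lemma diagm_carrier[simp]: "diagm n mu \<in> carrier_mat n n" unfolding diagm_def by simp

lemma jb_pow_one:
  assumes k: "0 < k" and N: "0 < N" and eq: "jordan_block k (a::complex) ^\<^sub>m N = 1\<^sub>m k"
  shows "k = 1"
proof (rule ccontr)
  assume "k \<noteq> 1"
  then have k2: "1 < k" using k by simp
  have e00: "(jordan_block k a ^\<^sub>m N) $$ (0, 0) = a ^ N"
    unfolding jordan_block_pow using k by simp
  have e01: "(jordan_block k a ^\<^sub>m N) $$ (0, 1) = of_nat N * a ^ (N - 1)"
    unfolding jordan_block_pow using k2 by simp
  have "a ^ N = 1" using e00 eq k by simp
  then have "a \<noteq> 0" using N by (metis power_0_left zero_neq_one less_irrefl)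
  moreover have "of_nat N * a ^ (N - 1) = 0" using e01 eq k2 by simp
  ultimately show False using N by simp
qed

lemma jordan_matrix_cons:
  "jordan_matrix ((k, a) # xs) = four_block_mat (jordan_block k a) (0\<^sub>m k (sum_list (map fst xs)))
     (0\<^sub>m (sum_list (map fst xs)) k) (jordan_matrix xs)"
  unfolding jordan_matrix_def by (simp add: Let_def jordan_matrix_def[symmetric])

lemma jordan_matrix_pow_cons:
  "jordan_matrix ((k, a) # xs) ^\<^sub>m N = four_block_mat (jordan_block k a ^\<^sub>m N) (0\<^sub>m k (sum_list (map fst xs)))
     (0\<^sub>m (sum_list (map fst xs)) k) (jordan_matrix xs ^\<^sub>m N)"
  unfolding jordan_matrix_pow by (simp add: Let_def jordan_matrix_pow[symmetric])

lemma JD: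
  assumes "0 \<notin> fst ` set n_as" "0 < N"
    "jordan_matrix (n_as :: (nat \<times> complex) list) ^\<^sub>m N = 1\<^sub>m (sum_list (map fst n_as))"
  shows "diagonal_mat (jordan_matrix n_as)"
  using assms
proof (induction n_as)
  case Nil then show ?case unfolding diagonal_mat_def by (simp add: jordan_matrix_def)
next
  case (Cons x xs)
  obtain k a where x: "x = (k, a)" by force
  let ?m = "sum_list (map fst xs)"
  let ?A = "jordan_block k a" and ?R = "jordan_matrix xs"
  have dA: "dim_row (?A ^\<^sub>m N) = k" "dim_col (?A ^\<^sub>m N) = k" "dim_row ?A = k" "dim_col ?A = k" by auto
  have dR: "dim_row (?R ^\<^sub>m N) = ?m" "dim_col (?R ^\<^sub>m N) = ?m" "dim_row ?R = ?m" "dim_col ?R = ?m" by auto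
  have hyp: "four_block_mat (?A ^\<^sub>m N) (0\<^sub>m k ?m) (0\<^sub>m ?m k) (?R ^\<^sub>m N) = 1\<^sub>m (k + ?m)"
    using Cons(4) unfolding x jordan_matrix_pow_cons by simp
  have k0: "0 < k" using Cons(2) x by auto
  have "?A ^\<^sub>m N = 1\<^sub>m k"
  proof (rule eq_matI)
    fix i j assume ij: "i < dim_row (1\<^sub>m k :: complex mat)" "j < dim_col (1\<^sub>m k :: complex mat)"
    have "four_block_mat (?A ^\<^sub>m N) (0\<^sub>m k ?m) (0\<^sub>m ?m k) (?R ^\<^sub>m N) $$ (i, j) = 1\<^sub>m (k + ?m) $$ (i, j)"
      using hyp by simp
    moreover have "four_block_mat (?A ^\<^sub>m N) (0\<^sub>m k ?m) (0\<^sub>m ?m k) (?R ^\<^sub>m N) $$ (i, j) = (?A ^\<^sub>m N) $$ (i, j)"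
      using ij by (subst index_mat_four_block) (auto simp: dR dA)
    ultimately show "(?A ^\<^sub>m N) $$ (i, j) = 1\<^sub>m k $$ (i, j)" using ij by simp
  qed auto
  then have k1: "k = 1" using jb_pow_one[OF k0 Cons(3)] by simp
  have "?R ^\<^sub>m N = 1\<^sub>m ?m"
  proof (rule eq_matI)
    fix i j assume ij: "i < dim_row (1\<^sub>m ?m :: complex mat)" "j < dim_col (1\<^sub>m ?m :: complex mat)"
    have "four_block_mat (?A ^\<^sub>m N) (0\<^sub>m k ?m) (0\<^sub>m ?m k) (?R ^\<^sub>m N) $$ (k + i, k + j) = 1\<^sub>m (k + ?m) $$ (k + i, k + j)"
      using hyp by simp
    moreover have "four_block_mat (?A ^\<^sub>m N) (0\<^sub>m k ?m) (0\<^sub>m ?m k) (?R ^\<^sub>m N) $$ (k + i, k + j) = (?R ^\<^sub>m N) $$ (i, j)"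
      using ij by (subst index_mat_four_block) (auto simp: dR dA)
    ultimately show "(?R ^\<^sub>m N) $$ (i, j) = 1\<^sub>m ?m $$ (i, j)" using ij by simp
  qed (auto simp: dR)
  then have dgR: "diagonal_mat ?R" using Cons by auto
  show ?case unfolding x jordan_matrix_cons diagonal_mat_def
  proof (intro allI impI)
    fix i j assume ij: "i < dim_row (four_block_mat ?A (0\<^sub>m k ?m) (0\<^sub>m ?m k) ?R)"
      "j < dim_col (four_block_mat ?A (0\<^sub>m k ?m) (0\<^sub>m ?m k) ?R)" "i \<noteq> j"
    show "four_block_mat ?A (0\<^sub>m k ?m) (0\<^sub>m ?m k) ?R $$ (i, j) = 0"
      using ij dgR k1 unfolding diagonal_mat_def by (auto simp: dR dA)
  qed
qed

lemma diag_exists: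
  assumes B: "(B :: complex mat) \<in> carrier_mat n n" and N: "0 < N" and BN: "B ^\<^sub>m N = 1\<^sub>m n"
  shows "\<exists>P Q mu. P \<in> carrier_mat n n \<and> Q \<in> carrier_mat n n \<and> P * Q = 1\<^sub>m n \<and> Q * P = 1\<^sub>m n \<and>
     P * B = diagm n mu * P"
proof -
  interpret nm n .
  obtain as where "char_poly B = (\<Prod>a\<leftarrow>as. [:- a, 1:])" using char_poly_factorized[OF B] by blast
  then obtain n_as where jnf: "jordan_nf B n_as" using jordan_nf_exists[OF B] by blast
  let ?J = "jordan_matrix n_as"
  obtain P0 Q0 where sw: "similar_mat_wit B ?J P0 Q0" using jnf unfolding jordan_nf_def similar_mat_def by blast
  have dB: "dim_row B = n" using B by simp
  note swd = sw[unfolded similar_mat_wit_def Let_def dB]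
  have c: "?J \<in> carrier_mat n n" "P0 \<in> carrier_mat n n" "Q0 \<in> carrier_mat n n" using swd by auto
  have PQ: "P0 * Q0 = 1\<^sub>m n" "Q0 * P0 = 1\<^sub>m n" and eqB: "B = P0 * ?J * Q0" using swd by auto
  have "B ^\<^sub>m N = P0 * ?J ^\<^sub>m N * Q0" by (rule similar_mat_wit_pow_id[OF sw])
  then have e1: "Q0 * (P0 * ?J ^\<^sub>m N * Q0) * P0 = Q0 * 1\<^sub>m n * P0" using BN by simp
  have "?J ^\<^sub>m N = (Q0 * P0) * ?J ^\<^sub>m N * (Q0 * P0)" using PQ c by (simp add: nsimps)
  also have "\<dots> = Q0 * (P0 * ?J ^\<^sub>m N * Q0) * P0" using c by (simp add: nsimps)
  also have "\<dots> = 1\<^sub>m n" using e1 c PQ by (simp add: nsimps)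
  finally have JN: "?J ^\<^sub>m N = 1\<^sub>m n" .
  have "dim_row ?J = n" using c(1) by auto
  then have dimJ: "sum_list (map fst n_as) = n" by simp
  have dg: "diagonal_mat ?J" by (rule JD) (use jnf N JN dimJ in \<open>auto simp: jordan_nf_def\<close>)
  have Jd: "?J = diagm n (\<lambda>i. ?J $$ (i, i))"
    using dg c(1) unfolding diagonal_mat_def diagm_def by (intro eq_matI) auto
  have "Q0 * B = Q0 * P0 * ?J * Q0" using eqB c by (simp add: nsimps)
  also have "\<dots> = ?J * Q0" using PQ c by (simp add: nsimps)
  finally have "Q0 * B = diagm n (\<lambda>i. ?J $$ (i, i)) * Q0" using Jd by simp
  then show ?thesis using c PQ by blast
qed



lemma diagm_mult: "diagm n a * diagm n b = diagm n (\<lambda>i. a i * b i)"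
  by (rule eq_matI) (auto simp: msimp diagm_def mult_if_delta1 mult_if_delta2 sum.delta sum.delta')

lemma diagm_pow: "diagm n a ^\<^sub>m m = diagm n (\<lambda>i. a i ^ m)"
proof (induction m)
  case 0 then show ?case by (auto simp: diagm_def one_mat_def)
next
  case (Suc m) then show ?case by (simp add: diagm_mult mult_ac)
qed

lemma mult_diagm_right: "A \<in> carrier_mat n n \<Longrightarrow> i < n \<Longrightarrow> j < n \<Longrightarrow> (A * diagm n a) $$ (i, j) = A $$ (i, j) * a j"
  by (auto simp: msimp diagm_def mult_if_delta2 sum.delta')

lemma mult_diagm_left: "A \<in> carrier_mat n n \<Longrightarrow> i < n \<Longrightarrow> j < n \<Longrightarrow> (diagm n a * A) $$ (i, j) = a i * A $$ (i, j)"
  by (auto simp: msimp diagm_def mult_if_delta1 sum.delta)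

context nm begin

lemma pow_add_n: "(g :: complex mat) \<in> carrier_mat n n \<Longrightarrow> g ^\<^sub>m (a + b) = g ^\<^sub>m a * g ^\<^sub>m b"
proof (induction b)
  case 0 then show ?case by simp
next
  case (Suc b) then show ?case by (simp add: nsimps)
qed

lemma comm_pow: assumes "A \<in> carrier_mat n n" "B \<in> carrier_mat n n" "A * B = B * (A :: complex mat)"
  shows "A ^\<^sub>m m * B = B * A ^\<^sub>m m"
proof (induction m)
  case 0 then show ?case using assms by (simp add: nsimps)
next
  case (Suc m)
  have "A ^\<^sub>m Suc m * B = A ^\<^sub>m m * (A * B)" using assms by (simp add: nsimps)
  also have "\<dots> = (A ^\<^sub>m m * B) * A" using assms by (simp add: nsimps)
  also have "\<dots> = B * A ^\<^sub>m Suc m" using assms Suc by (simp add: nsimps)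
  finally show ?case .
qed

lemma mult_pow: assumes "A \<in> carrier_mat n n" "B \<in> carrier_mat n n" "A * B = B * (A :: complex mat)"
  shows "(A * B) ^\<^sub>m m = A ^\<^sub>m m * B ^\<^sub>m m"
proof (induction m)
  case 0 then show ?case using assms by (simp add: nsimps)
next
  case (Suc m)
  have "(A * B) ^\<^sub>m Suc m = A ^\<^sub>m m * (B ^\<^sub>m m * A) * B" using assms Suc by (simp add: nsimps)
  also have "\<dots> = A ^\<^sub>m m * (A * B ^\<^sub>m m) * B" using comm_pow[OF assms(2,1) assms(3)[symmetric]] by simp
  also have "\<dots> = A ^\<^sub>m Suc m * B ^\<^sub>m Suc m" using assms by (simp add: nsimps)
  finally show ?case .
qed

lemma pow_mult_one: assumes "(A :: complex mat) \<in> carrier_mat n n" "A ^\<^sub>m N = 1\<^sub>m n" shows "A ^\<^sub>m (N * K) = 1\<^sub>m n"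
proof (induction K)
  case 0 then show ?case using assms by simp
next
  case (Suc K)
  have "A ^\<^sub>m (N * Suc K) = A ^\<^sub>m (N * K) * A ^\<^sub>m N"
    using pow_add_n[OF assms(1), of "N * K" N] by (simp add: add.commute)
  then show ?case using Suc assms by (simp add: nsimps)
qed

end

section \<open>Roots of unity\<close>

definition zeta :: "nat \<Rightarrow> complex" where "zeta M = exp (2 * pi * \<i> / of_nat M)"

lemma zeta_pow: "zeta M ^ m = exp (2 * pi * \<i> * of_nat m / of_nat M)"
  unfolding zeta_def by (simp add: exp_of_nat_mult[symmetric] mult_ac)

lemma zeta_pow_M: "0 < M \<Longrightarrow> zeta M ^ M = 1"
  unfolding zeta_pow by simp

lemma zeta_nz: "zeta M \<noteq> 0" unfolding zeta_def by simp

lemma zeta_pow_eq1: assumes "0 < M" "zeta M ^ m = 1" shows "M dvd m"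
proof -
  have "exp (2 * pi * \<i> * of_nat m / of_nat M) = 1" using assms(2) unfolding zeta_pow .
  then obtain k :: int where k: "Im (2 * pi * \<i> * of_nat m / of_nat M) = of_int (2 * k) * pi"
    unfolding exp_eq_1 by blast
  then have "2 * pi * real m / real M = 2 * real_of_int k * pi" by simp
  then have "real m = real_of_int k * real M" using assms(1) by (simp add: field_simps)
  then have "int m = k * int M" by (metis of_int_eq_iff of_int_mult of_int_of_nat_eq)
  then show "M dvd m" by (metis dvd_triv_right int_dvd_int_iff)
qed

lemma zeta_inj:
  assumes N: "0 < N" and K: "0 < K" and c: "c < K" "c' < K"
    and eq: "zeta (N * K) ^ (N * c) = zeta (N * K) ^ (N * c')"
  shows "c = c'"
proof (rule ccontr)
  assume ne: "c \<noteq> c'"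
  have main: "c = c'" if "c \<le> c'" "zeta (N * K) ^ (N * c) = zeta (N * K) ^ (N * c')" "c < K" "c' < K" for c c'
  proof -
    have "N * c' = N * c + N * (c' - c)" using that by (simp add: diff_mult_distrib2)
    then have "zeta (N * K) ^ (N * c') = zeta (N * K) ^ (N * c + N * (c' - c))" by simp
    then have "zeta (N * K) ^ (N * c') = zeta (N * K) ^ (N * c) * zeta (N * K) ^ (N * (c' - c))"
      by (simp add: power_add)
    then have "zeta (N * K) ^ (N * (c' - c)) = 1" using that zeta_nz by simp
    then have "N * K dvd N * (c' - c)" using zeta_pow_eq1[of "N * K" "N * (c' - c)"] N K by simp
    then have "K dvd c' - c" using N by simp
    then show "c = c'" using that by (metis diff_less_mono2 dvd_imp_le le_neq_implies_less less_imp_diff_less not_less zero_less_diff)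
  qed
  show False using main[of c c'] main[of c' c] eq ne c by (cases "c \<le> c'") auto
qed



lemma count_map_upt: "count (mset (map f [0..<n])) v = card {i. i < n \<and> f i = v}"
proof (induction n)
  case 0 then show ?case by simp
next
  case (Suc n)
  have "{i. i < Suc n \<and> f i = v} = {i. i < n \<and> f i = v} \<union> (if f n = v then {n} else {})" by (auto simp: less_Suc_eq)
  then have "card {i. i < Suc n \<and> f i = v} = card {i. i < n \<and> f i = v} + (if f n = v then 1 else 0)"
    by (auto simp: card_insert_if)
  then show ?case using Suc by simp
qed

lemma eig_exists:
  fixes g :: "complex mat"
  assumes g: "g \<in> carrier_mat n n" and b: "blk n w g" and N: "0 < N" and gN: "g ^\<^sub>m N = 1\<^sub>m n"
  shows "\<exists>D. eigendata n w g D"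
proof -
  interpret nm n .
  define K where "K = Suc (Max (insert 0 (w ` {..<n})))"
  have wK: "w i < K" if "i < n" for i
  proof -
    have "w i \<le> Max (insert 0 (w ` {..<n}))" using that by (intro Max_ge) auto
    then show ?thesis unfolding K_def by simp
  qed
  have K0: "0 < K" unfolding K_def by simp
  define z where "z = zeta (N * K)"
  have zNK: "z ^ (N * K) = 1" unfolding z_def using N K0 by (simp add: zeta_pow_M)
  have znz: "z \<noteq> 0" unfolding z_def by (rule zeta_nz)
  define E where "E = diagm n (\<lambda>i. z ^ w i)"
  have Ec: "E \<in> carrier_mat n n" unfolding E_def by simp
  define B where "B = g * E"
  have Bc: "B \<in> carrier_mat n n" unfolding B_def using g Ec by simp
  have gE: "g * E = E * g"
  proof (rule eq_matI)
    fix i j assume ij: "i < dim_row (E * g)" "j < dim_col (E * g)"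
    then have ij': "i < n" "j < n" using g Ec by auto
    show "(g * E) $$ (i, j) = (E * g) $$ (i, j)"
      unfolding E_def using ij' g b unfolding blk_def
      by (cases "w i = w j") (auto simp: mult_diagm_right mult_diagm_left mult.commute)
  qed (use g Ec in auto)
  have EN: "E ^\<^sub>m (N * K) = 1\<^sub>m n"
  proof -
    have "E ^\<^sub>m (N * K) = diagm n (\<lambda>i. (z ^ w i) ^ (N * K))" unfolding E_def diagm_pow ..
    also have "\<dots> = diagm n (\<lambda>i. 1)"
    proof -
      have "(z ^ w i) ^ (N * K) = 1" for i by (metis power_mult mult.commute zNK power_one)
      then show ?thesis by simp
    qed
    also have "\<dots> = 1\<^sub>m n" unfolding diagm_def by (rule eq_matI) auto
    finally show ?thesis .
  qed
  have BN: "B ^\<^sub>m (N * K) = 1\<^sub>m n"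
    unfolding B_def using mult_pow[OF g Ec gE] pow_mult_one[OF g gN] EN g by simp
  obtain P0 Q0 mu where PQ0: "P0 \<in> carrier_mat n n" "Q0 \<in> carrier_mat n n" "P0 * Q0 = 1\<^sub>m n" "Q0 * P0 = 1\<^sub>m n"
    "P0 * B = diagm n mu * P0"
    using diag_exists[OF Bc _ BN] N K0 by auto
  have R: "(\<Sum>l<n. P0 $$ (k, l) * g $$ (l, j)) * z ^ w j = mu k * P0 $$ (k, j)" if "k < n" "j < n" for k j
  proof -
    have "(P0 * B) $$ (k, j) = (P0 * g * E) $$ (k, j)" unfolding B_def using PQ0 g Ec by (simp add: nsimps)
    also have "\<dots> = (P0 * g) $$ (k, j) * z ^ w j" unfolding E_def using that PQ0 g by (simp add: mult_diagm_right)
    also have "\<dots> = (\<Sum>l<n. P0 $$ (k, l) * g $$ (l, j)) * z ^ w j" using that PQ0 g by (simp add: msimp)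
    finally show ?thesis using PQ0(5) that PQ0 by (simp add: mult_diagm_left)
  qed
  have key: "z ^ (N * w j) = mu k ^ N" if kj: "k < n" "j < n" "P0 $$ (k, j) \<noteq> 0" for k j
  proof -
    define c where "c = w j"
    define u where "u l = (if w l = c then P0 $$ (k, l) else 0)" for l
    have F: "(\<Sum>l<n. u l * g $$ (l, j')) * z ^ c = mu k * u j'" if "j' < n" for j'
    proof (cases "w j' = c")
      case True
      have "(\<Sum>l<n. u l * g $$ (l, j')) = (\<Sum>l<n. P0 $$ (k, l) * g $$ (l, j'))"
      proof (rule sum.cong[OF refl])
        fix l assume l: "l \<in> {..<n}"
        show "u l * g $$ (l, j') = P0 $$ (k, l) * g $$ (l, j')"
        proof (cases "w l = c")
          case False
          then have "g $$ (l, j') = 0" using b l \<open>j' < n\<close> True unfolding blk_def by auto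
          then show ?thesis by simp
        qed (simp add: u_def)
      qed
      then show ?thesis using R[OF kj(1) that] True unfolding u_def by simp
    next
      case False
      have "(\<Sum>l<n. u l * g $$ (l, j')) = 0"
        by (rule sum.neutral) (use b that False in \<open>auto simp: u_def blk_def\<close>)
      then show ?thesis using False unfolding u_def by simp
    qed
    have Fm: "(\<Sum>l<n. u l * (g ^\<^sub>m m) $$ (l, j')) * z ^ (c * m) = mu k ^ m * u j'" if "j' < n" for m j'
      using that
    proof (induction m arbitrary: j')
      case 0 then show ?case using g by (simp add: mult_if_delta2 sum.delta' cong: if_cong)
    next
      case (Suc m)
      have "(\<Sum>l<n. u l * (g ^\<^sub>m Suc m) $$ (l, j')) = (\<Sum>l<n. \<Sum>t<n. u l * (g ^\<^sub>m m) $$ (l, t) * g $$ (t, j'))"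
        using g Suc.prems by (simp add: msimp sum_distrib_left mult_ac)
      also have "\<dots> = (\<Sum>t<n. (\<Sum>l<n. u l * (g ^\<^sub>m m) $$ (l, t)) * g $$ (t, j'))"
        by (subst sum.swap) (simp add: sum_distrib_right)
      moreover have zz: "z ^ (c * Suc m) = z ^ (c * m) * z ^ c" by (simp add: power_add)
      ultimately have "(\<Sum>l<n. u l * (g ^\<^sub>m Suc m) $$ (l, j')) * z ^ (c * Suc m) =
         (\<Sum>t<n. ((\<Sum>l<n. u l * (g ^\<^sub>m m) $$ (l, t)) * z ^ (c * m)) * g $$ (t, j')) * z ^ c"
        by (simp only: zz) (simp add: sum_distrib_right sum_distrib_left mult_ac)
      also have "\<dots> = (\<Sum>t<n. mu k ^ m * u t * g $$ (t, j')) * z ^ c"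
        using Suc.IH by simp
      also have "\<dots> = mu k ^ m * ((\<Sum>t<n. u t * g $$ (t, j')) * z ^ c)"
        by (simp add: sum_distrib_left mult_ac)
      also have "\<dots> = mu k ^ Suc m * u j'" using F[OF Suc.prems] by simp
      finally show ?case .
    qed
    have "(\<Sum>l<n. u l * (g ^\<^sub>m N) $$ (l, j)) * z ^ (c * N) = mu k ^ N * u j" using Fm[OF kj(2)] .
    then have "u j * z ^ (c * N) = mu k ^ N * u j" using gN kj(2) by (simp add: mult_if_delta2 sum.delta' cong: if_cong)
    moreover have "u j \<noteq> 0" using kj unfolding u_def c_def by simp
    ultimately show ?thesis unfolding c_def by (simp add: mult.commute)
  qed
  have supp: "w j = w j'" if "k < n" "j < n" "j' < n" "P0 $$ (k, j) \<noteq> 0" "P0 $$ (k, j') \<noteq> 0" for k j j'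
  proof -
    have "z ^ (N * w j) = z ^ (N * w j')" using key that by metis
    then show ?thesis using zeta_inj[OF N K0 wK[OF that(2)] wK[OF that(3)]] unfolding z_def by simp
  qed
  have rownz: "\<exists>j<n. P0 $$ (k, j) \<noteq> 0" if "k < n" for k
  proof (rule ccontr)
    assume "\<not> (\<exists>j<n. P0 $$ (k, j) \<noteq> 0)"
    then have "(P0 * Q0) $$ (k, k) = 0" using PQ0(1,2) that by (simp add: msimp)
    then show False using PQ0 that by simp
  qed
  define cl where "cl k = w (SOME j. j < n \<and> P0 $$ (k, j) \<noteq> 0)" for k
  have clp: "w j = cl k" if "k < n" "j < n" "P0 $$ (k, j) \<noteq> 0" for k j
  proof -
    have "(SOME j. j < n \<and> P0 $$ (k, j) \<noteq> 0) < n \<and> P0 $$ (k, SOME j. j < n \<and> P0 $$ (k, j) \<noteq> 0) \<noteq> 0"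
      using someI_ex[of "\<lambda>j. j < n \<and> P0 $$ (k, j) \<noteq> 0"] rownz[OF that(1)] by blast
    then show ?thesis unfolding cl_def using supp that by blast
  qed
  define rho where "rho k = mu k / z ^ cl k" for k
  have Ev: "(\<Sum>l<n. P0 $$ (k, l) * g $$ (l, j)) = rho k * P0 $$ (k, j)" if "k < n" "j < n" for k j
  proof (cases "w j = cl k")
    case True
    then show ?thesis using R[OF that] znz unfolding rho_def by (simp add: field_simps)
  next
    case False
    then have "P0 $$ (k, j) = 0" using clp that by blast
    moreover have "(\<Sum>l<n. P0 $$ (k, l) * g $$ (l, j)) = 0"
    proof (rule sum.neutral, intro ballI)
      fix l assume "l \<in> {..<n}"
      then show "P0 $$ (k, l) * g $$ (l, j) = 0"
        using clp[OF that(1), of l] b False that unfolding blk_def by (cases "P0 $$ (k, l) = 0") auto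
    qed
    ultimately show ?thesis by simp
  qed
  have count: "card {k. k < n \<and> cl k = v} = card {j. j < n \<and> w j = v}" for v
  proof -
    let ?A = "{k. k < n \<and> cl k = v}" and ?C = "{j. j < n \<and> w j = v}"
    have fA: "finite ?A" "?A \<subseteq> {..<n}" and fC: "finite ?C" "?C \<subseteq> {..<n}" by auto
    have "(of_nat (card ?A) :: complex) = (\<Sum>k\<in>?A. \<Sum>j<n. P0 $$ (k, j) * Q0 $$ (j, k))"
    proof -
      have "\<And>k. k \<in> ?A \<Longrightarrow> (\<Sum>j<n. P0 $$ (k, j) * Q0 $$ (j, k)) = 1"
      proof -
        fix k assume "k \<in> ?A"
        then have "(P0 * Q0) $$ (k, k) = 1" using PQ0 by simp
        then show "(\<Sum>j<n. P0 $$ (k, j) * Q0 $$ (j, k)) = 1" using PQ0(1,2) \<open>k \<in> ?A\<close> by (simp add: msimp)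
      qed
      then show ?thesis by simp
    qed
    also have "\<dots> = (\<Sum>k\<in>?A. \<Sum>j\<in>?C. P0 $$ (k, j) * Q0 $$ (j, k))"
    proof (rule sum.cong[OF refl])
      fix k assume k: "k \<in> ?A"
      show "(\<Sum>j<n. P0 $$ (k, j) * Q0 $$ (j, k)) = (\<Sum>j\<in>?C. P0 $$ (k, j) * Q0 $$ (j, k))"
        by (rule sum.mono_neutral_right) (use k clp in auto)
    qed
    also have "\<dots> = (\<Sum>j\<in>?C. \<Sum>k\<in>?A. Q0 $$ (j, k) * P0 $$ (k, j))"
      by (subst sum.swap) (simp add: mult.commute)
    also have "\<dots> = (\<Sum>j\<in>?C. \<Sum>k<n. Q0 $$ (j, k) * P0 $$ (k, j))"
    proof (rule sum.cong[OF refl])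
      fix j assume j: "j \<in> ?C"
      show "(\<Sum>k\<in>?A. Q0 $$ (j, k) * P0 $$ (k, j)) = (\<Sum>k<n. Q0 $$ (j, k) * P0 $$ (k, j))"
        by (rule sum.mono_neutral_left) (use j clp in auto)
    qed
    also have "\<dots> = (\<Sum>j\<in>?C. 1)"
    proof (rule sum.cong[OF refl])
      fix j assume j: "j \<in> ?C"
      then have "(Q0 * P0) $$ (j, j) = 1" using PQ0 by simp
      then show "(\<Sum>k<n. Q0 $$ (j, k) * P0 $$ (k, j)) = 1" using PQ0(1,2) j by (simp add: msimp)
    qed
    finally show ?thesis by simp
  qed
  have "mset (map w [0..<n]) = mset (map cl [0..<n])"
    by (rule multiset_eqI) (simp only: count_map_upt count)
  then obtain p where p: "p permutes {..<length (map cl [0..<n])}" "permute_list p (map cl [0..<n]) = map w [0..<n]"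
    by (rule mset_eq_permutation)
  then have pp: "p permutes {..<n}" by simp
  have pn: "p i < n" if "i < n" for i using permutes_in_image[OF pp] that by simp
  have pw: "cl (p i) = w i" if "i < n" for i
  proof -
    have "permute_list p (map cl [0..<n]) ! i = map cl [0..<n] ! p i" using permute_list_nth[OF p(1)] that by simp
    then show ?thesis using p(2) that pn[OF that] by simp
  qed
  have pinj: "p i = p i' \<longleftrightarrow> i = i'" for i i' using permutes_inj[OF pp] by (auto dest: injD)
  define P where "P = mat n n (\<lambda>(i, j). P0 $$ (p i, j))"
  define Q where "Q = mat n n (\<lambda>(j, i). Q0 $$ (j, p i))"
  define lam where "lam i = rho (p i)" for i
  have Pc: "P \<in> carrier_mat n n" and Qc: "Q \<in> carrier_mat n n" unfolding P_def Q_def by auto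
  have PQ: "P * Q = 1\<^sub>m n"
  proof (rule eq_matI)
    fix i i' assume ii: "i < dim_row (1\<^sub>m n :: complex mat)" "i' < dim_col (1\<^sub>m n :: complex mat)"
    have "(P * Q) $$ (i, i') = (P0 * Q0) $$ (p i, p i')"
      using ii PQ0(1,2) pn unfolding P_def Q_def by (simp add: msimp)
    also have "\<dots> = 1\<^sub>m n $$ (i, i')" using PQ0 ii pn pinj by simp
    finally show "(P * Q) $$ (i, i') = 1\<^sub>m n $$ (i, i')" .
  qed (use Pc Qc in auto)
  have QP: "Q * P = 1\<^sub>m n"
  proof (rule eq_matI)
    fix j j' assume jj: "j < dim_row (1\<^sub>m n :: complex mat)" "j' < dim_col (1\<^sub>m n :: complex mat)"
    have "(Q * P) $$ (j, j') = (\<Sum>i<n. Q0 $$ (j, p i) * P0 $$ (p i, j'))"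
      using jj pn unfolding P_def Q_def by (simp add: msimp)
    also have "\<dots> = (\<Sum>k<n. Q0 $$ (j, k) * P0 $$ (k, j'))"
      using sum.reindex_bij_betw[OF permutes_imp_bij[OF pp], of "\<lambda>k. Q0 $$ (j, k) * P0 $$ (k, j')"] by simp
    also have "\<dots> = (Q0 * P0) $$ (j, j')" using jj PQ0(1,2) by (simp add: msimp)
    also have "\<dots> = 1\<^sub>m n $$ (j, j')" using PQ0 by simp
    finally show "(Q * P) $$ (j, j') = 1\<^sub>m n $$ (j, j')" .
  qed (use Pc Qc in auto)
  have Pg: "P * g = mat n n (\<lambda>(i, j). if i = j then lam i else 0) * P"
  proof (rule eq_matI)
    fix i j assume ij: "i < dim_row (mat n n (\<lambda>(i, j). if i = j then lam i else 0) * P)"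
      "j < dim_col (mat n n (\<lambda>(i, j). if i = j then lam i else 0) * P)"
    then have ij': "i < n" "j < n" using Pc by auto
    have "(P * g) $$ (i, j) = (\<Sum>l<n. P0 $$ (p i, l) * g $$ (l, j))"
      using ij' g unfolding P_def by (simp add: msimp)
    also have "\<dots> = lam i * P $$ (i, j)" using Ev[OF pn[OF ij'(1)] ij'(2)] ij' unfolding lam_def P_def by simp
    also have "\<dots> = (mat n n (\<lambda>(i, j). if i = j then lam i else 0) * P) $$ (i, j)"
      using mult_diagm_left[OF Pc ij', of lam] unfolding diagm_def by simp
    finally show "(P * g) $$ (i, j) = (mat n n (\<lambda>(i, j). if i = j then lam i else 0) * P) $$ (i, j)" .
  qed (use Pc g in auto)
  have Pb: "\<forall>i<n. \<forall>j<n. w i \<noteq> w j \<longrightarrow> P $$ (i, j) = 0"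
    using clp pn pw unfolding P_def by (metis case_prod_conv index_mat(1))
  show ?thesis unfolding eigendata_def
    by (rule exI[of _ "(P, Q, lam)"]) (use Pc Qc PQ QP Pg Pb in auto)
qed



interpretation fs: vector_space fscale
  by unfold_locales (auto simp: fscale_def fun_eq_iff algebra_simps)

lemma cdim_transport:
  fixes T :: "((nat \<Rightarrow> complex) \<Rightarrow> complex) \<Rightarrow> ((nat \<Rightarrow> complex) \<Rightarrow> complex)"
  assumes add: "\<And>f g. T (f + g) = T f + T g" and sc: "\<And>c f. T (fscale c f) = fscale c (T f)"
    and inj: "inj_on T (fs.span S)"
  shows "cdim (T ` S) = cdim S"
proof -
  interpret lin: module_hom fscale fscale T
    by unfold_locales (use add sc in auto)
  obtain B where B: "B \<subseteq> S" "fs.independent B" "S \<subseteq> fs.span B" "card B = fs.dim S"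
    using fs.basis_exists[of S] by blast
  have spB: "fs.span S = fs.span B"
    using fs.span_mono[of B S] fs.span_mono[of S "fs.span B"] fs.span_span[of B] B by auto
  have injB: "inj_on T (fs.span B)" using inj spB by simp
  have ind: "fs.independent (T ` B)" by (rule lin.independent_injective_image[OF B(2) injB])
  have cardTB: "card (T ` B) = card B"
    using card_image[OF inj_on_subset[OF injB fs.span_superset]] .
  have "fs.dim (T ` S) = fs.dim (fs.span (T ` S))" by simp
  also have "fs.span (T ` S) = fs.span (T ` B)" unfolding lin.span_image spB ..
  also have "fs.dim (fs.span (T ` B)) = card (T ` B)" using fs.dim_eq_card_independent[OF ind] by simp
  finally show ?thesis unfolding cdim_def using cardTB B(4) by simp
qed



definition tr :: "nat \<Rightarrow> complex mat \<Rightarrow> ((nat \<Rightarrow> complex) \<Rightarrow> complex) \<Rightarrow> ((nat \<Rightarrow> complex) \<Rightarrow> complex)" where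
  "tr n L f = (\<lambda>b. f (mact n L b))"

definition rowc :: "nat \<Rightarrow> nat set \<Rightarrow> nat set \<Rightarrow> complex mat \<Rightarrow> bool" where
  "rowc n I J L \<longleftrightarrow> (\<forall>i\<in>J. \<forall>j<n. j \<notin> I \<longrightarrow> L $$ (i, j) = 0)"

lemma tr_add: "tr n L (f + g) = tr n L f + tr n L g" unfolding tr_def by (simp add: fun_eq_iff)
lemma tr_scale: "tr n L (fscale c f) = fscale c (tr n L f)" unfolding tr_def fscale_def by simp

lemma tr_comp: "A \<in> carrier_mat n n \<Longrightarrow> B \<in> carrier_mat n n \<Longrightarrow> tr n A (tr n B f) = tr n (B * A) f"
  unfolding tr_def by (simp add: mact_mult)

lemma tr_one: assumes "dep J f" "J \<subseteq> {..<n}" shows "tr n (1\<^sub>m n) f = f"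
proof
  fix b
  have h: "\<And>i. i \<in> J \<Longrightarrow> (if i < n then b i else (0::complex)) = b i" using assms(2) by auto
  have "f (mact n (1\<^sub>m n) b) = f b" unfolding mact_one by (rule assms(1)[unfolded dep_def, rule_format, OF h])
  then show "tr n (1\<^sub>m n) f b = f b" unfolding tr_def .
qed

lemma tr_inv: assumes "L \<in> carrier_mat n n" "M \<in> carrier_mat n n" "L * M = 1\<^sub>m n" "dep J f" "J \<subseteq> {..<n}"
  shows "tr n M (tr n L f) = f"
  using tr_comp[OF assms(2,1)] assms(3) tr_one[OF assms(4,5)] by simp

lemma mact_row: assumes "rowc n I J L" "I \<subseteq> {..<n}" "i \<in> J" "J \<subseteq> {..<n}"
  shows "mact n L b i = (\<Sum>l\<in>I. L $$ (i, l) * b l)"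
proof -
  have "i < n" using assms by auto
  then have "mact n L b i = (\<Sum>l<n. L $$ (i, l) * b l)" unfolding mact_def by simp
  also have "\<dots> = (\<Sum>l\<in>I. L $$ (i, l) * b l)"
    by (rule sum.mono_neutral_right) (use assms in \<open>auto simp: rowc_def\<close>)
  finally show ?thesis .
qed

lemma poly_fun_row: assumes "rowc n I J L" "I \<subseteq> {..<n}" "i \<in> J" "J \<subseteq> {..<n}"
  shows "poly_fun I (\<lambda>b. mact n L b i)"
proof -
  have fI: "finite I" using assms(2) finite_subset by blast
  have "poly_fun I (\<lambda>b. \<Sum>l\<in>I. L $$ (i, l) * b l)"
  proof (rule poly_fun_sum[OF fI fI])
    fix l assume "l \<in> I"
    show "poly_fun I (\<lambda>a. L $$ (i, l) * a l)"
      by (rule poly_fun_mult[OF poly_fun_const poly_fun_var[OF fI \<open>l \<in> I\<close>]])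
  qed
  then show ?thesis using mact_row[OF assms] by simp
qed

lemma tr_poly: assumes "rowc n I J L" "I \<subseteq> {..<n}" "J \<subseteq> {..<n}" "poly_fun J f"
  shows "poly_fun I (tr n L f)"
  unfolding tr_def
  by (rule poly_fun_comp[OF _ assms(4)]) (use assms poly_fun_row finite_subset[OF assms(2)] in auto)

lemma mact_wscale: assumes "blk n w L" shows "mact n L (wscale w l b) = wscale w l (mact n L b)"
proof
  fix i show "mact n L (wscale w l b) i = wscale w l (mact n L b) i"
  proof (cases "i < n")
    case True
    have "(\<Sum>j<n. L $$ (i, j) * (l ^ w j * b j)) = (\<Sum>j<n. l ^ w i * (L $$ (i, j) * b j))"
    proof (rule sum.cong[OF refl])
      fix j assume j: "j \<in> {..<n}"
      show "L $$ (i, j) * (l ^ w j * b j) = l ^ w i * (L $$ (i, j) * b j)"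
        by (cases "w i = w j") (use assms True j in \<open>auto simp: blk_def\<close>)
    qed
    then show ?thesis using True unfolding mact_def wscale_def by (simp add: sum_distrib_left)
  qed (simp add: mact_def wscale_def)
qed

lemma tr_charge: assumes "blk n w L" "has_charge w d c f" shows "has_charge w d c (tr n L f)"
  using assms(2) unfolding has_charge_def whom_def tr_def mact_wscale[OF assms(1)] by auto

lemma tr_jac:
  assumes I: "I \<subseteq> {..<n}" and J: "J \<subseteq> {..<n}" and L: "L \<in> carrier_mat n n" and M: "M \<in> carrier_mat n n"
    and LM: "L * M = 1\<^sub>m n" and rc: "rowc n I J L" and F: "poly_fun J F"
    and f: "f \<in> jac_ideal J F"
  shows "tr n L f \<in> jac_ideal I (tr n L F)"
proof -
  have fI: "finite I" and fJ: "finite J" using I J finite_subset by auto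
  obtain r where r: "\<forall>i\<in>J. poly_fun J (r i)" "f = (\<lambda>a. \<Sum>i\<in>J. r i a * pderiv_var i F a)"
    using f unfolding jac_ideal_def by blast
  define r' where "r' j = (\<lambda>b. \<Sum>i\<in>J. M $$ (j, i) * r i (mact n L b))" for j
  have r'p: "poly_fun I (r' j)" for j
    unfolding r'_def
    by (rule poly_fun_sum[OF fI fJ], rule poly_fun_mult[OF poly_fun_const])
      (use tr_poly[OF rc I J] r(1) in \<open>auto simp: tr_def\<close>)
  have chain: "pderiv_var j (tr n L F) b = (\<Sum>i\<in>J. L $$ (i, j) * pderiv_var i F (mact n L b))" if "j \<in> I" for j b
    unfolding tr_def by (rule chain_rule[OF fJ J F]) (use that I in auto)
  have delta: "(\<Sum>j\<in>I. L $$ (i', j) * M $$ (j, i)) = (if i' = i then 1 else 0)" if "i \<in> J" "i' \<in> J" for i i'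
  proof -
    have "(\<Sum>j\<in>I. L $$ (i', j) * M $$ (j, i)) = (\<Sum>j<n. L $$ (i', j) * M $$ (j, i))"
      by (rule sum.mono_neutral_left) (use that rc I in \<open>auto simp: rowc_def\<close>)
    also have "\<dots> = (L * M) $$ (i', i)"
    proof -
      have "i < n" "i' < n" using that J by auto
      then show ?thesis using L M by (simp add: msimp)
    qed
    also have "\<dots> = (if i' = i then 1 else 0)"
    proof -
      have "i < n" "i' < n" using that J by auto
      then show ?thesis using LM by simp
    qed
    finally show ?thesis .
  qed
  have "tr n L f = (\<lambda>b. \<Sum>j\<in>I. r' j b * pderiv_var j (tr n L F) b)"
  proof
    fix b
    let ?r = "\<lambda>i. r i (mact n L b)" and ?p = "\<lambda>i. pderiv_var i F (mact n L b)"
    have "(\<Sum>j\<in>I. r' j b * pderiv_var j (tr n L F) b) = (\<Sum>j\<in>I. (\<Sum>i\<in>J. M $$ (j, i) * ?r i) * (\<Sum>i'\<in>J. L $$ (i', j) * ?p i'))"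
      unfolding r'_def by (simp add: chain)
    also have "\<dots> = (\<Sum>j\<in>I. \<Sum>i\<in>J. \<Sum>i'\<in>J. ?r i * ?p i' * (L $$ (i', j) * M $$ (j, i)))"
      by (simp add: sum_product mult_ac)
    also have "\<dots> = (\<Sum>i\<in>J. \<Sum>i'\<in>J. \<Sum>j\<in>I. ?r i * ?p i' * (L $$ (i', j) * M $$ (j, i)))"
      by (subst sum.swap) (simp add: sum.swap[of _ I])
    also have "\<dots> = (\<Sum>i\<in>J. \<Sum>i'\<in>J. ?r i * ?p i' * (if i' = i then 1 else 0))"
      by (rule sum.cong[OF refl], rule sum.cong[OF refl]) (simp add: sum_distrib_left[symmetric] delta)
    also have "\<dots> = (\<Sum>i\<in>J. ?r i * ?p i)"
      by (rule sum.cong[OF refl]) (simp add: mult_if_delta2 sum.delta' fJ)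
    also have "\<dots> = tr n L f b" unfolding tr_def r(2) ..
    finally show "tr n L f b = (\<Sum>j\<in>I. r' j b * pderiv_var j (tr n L F) b)" by simp
  qed
  then show ?thesis unfolding jac_ideal_def using r'p by blast
qed



lemma sum_sorted: "finite I \<Longrightarrow> (\<Sum>c<length (sorted_list_of_set I). f (sorted_list_of_set I ! c)) = (\<Sum>x\<in>I. f x)"
  by (rule sum.reindex_bij_betw[OF bij_betw_nth]) auto

lemma sorted_nth_in: "finite I \<Longrightarrow> c < length (sorted_list_of_set I) \<Longrightarrow> sorted_list_of_set I ! c \<in> I"
  using nth_mem[of c "sorted_list_of_set I"] by simp

definition condT :: "nat \<Rightarrow> nat set \<Rightarrow> nat set \<Rightarrow> complex mat \<Rightarrow> bool" where
  "condT n I J L \<longleftrightarrow> (\<forall>i<n. \<forall>j<n. L $$ (i, j) \<noteq> 0 \<longrightarrow> (i \<in> J \<longleftrightarrow> j \<in> I))"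

lemma trace_eq:
  assumes I: "I \<subseteq> {..<n}" and J: "J \<subseteq> {..<n}" and L: "L \<in> carrier_mat n n" and M: "M \<in> carrier_mat n n"
    and LM: "L * M = 1\<^sub>m n" and ML1: "M * L = 1\<^sub>m n" and cL: "condT n I J L" and cM: "condT n J I M"
    and phi: "\<forall>i<n. \<forall>j<n. M $$ (i, j) \<noteq> 0 \<longrightarrow> phi i = phi j"
  shows "(\<Sum>x\<in>I. phi x) = (\<Sum>i\<in>J. (phi i :: complex))"
proof -
  have dML: "(\<Sum>i<n. M $$ (x, i) * L $$ (i, x)) = 1" if "x \<in> I" for x
  proof -
    have "x < n" using that I by auto
    then have "(M * L) $$ (x, x) = (\<Sum>i<n. M $$ (x, i) * L $$ (i, x))" using M L by (simp add: msimp)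
    then show ?thesis using ML1 \<open>x < n\<close> by simp
  qed
  have dLM: "(\<Sum>x<n. L $$ (i, x) * M $$ (x, i)) = 1" if "i \<in> J" for i
  proof -
    have "i < n" using that J by auto
    then have "(L * M) $$ (i, i) = (\<Sum>x<n. L $$ (i, x) * M $$ (x, i))" using M L by (simp add: msimp)
    then show ?thesis using LM \<open>i < n\<close> by simp
  qed
  have "(\<Sum>x\<in>I. phi x) = (\<Sum>x\<in>I. \<Sum>i<n. phi x * (M $$ (x, i) * L $$ (i, x)))"
    by (rule sum.cong[OF refl]) (simp add: sum_distrib_left[symmetric] dML)
  also have "\<dots> = (\<Sum>x\<in>I. \<Sum>i\<in>J. phi x * (M $$ (x, i) * L $$ (i, x)))"
  proof (rule sum.cong[OF refl])
    fix x assume x: "x \<in> I"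
    show "(\<Sum>i<n. phi x * (M $$ (x, i) * L $$ (i, x))) = (\<Sum>i\<in>J. phi x * (M $$ (x, i) * L $$ (i, x)))"
      by (rule sum.mono_neutral_right) (use x I J cM in \<open>auto simp: condT_def\<close>)
  qed
  also have "\<dots> = (\<Sum>x\<in>I. \<Sum>i\<in>J. phi i * (L $$ (i, x) * M $$ (x, i)))"
  proof (intro sum.cong[OF refl])
    fix x i assume x: "x \<in> I" and i: "i \<in> J"
    show "phi x * (M $$ (x, i) * L $$ (i, x)) = phi i * (L $$ (i, x) * M $$ (x, i))"
      using phi x i I J by (cases "M $$ (x, i) = 0") auto
  qed
  also have "\<dots> = (\<Sum>i\<in>J. phi i * (\<Sum>x\<in>I. L $$ (i, x) * M $$ (x, i)))"
    by (subst sum.swap) (simp add: sum_distrib_left)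
  also have "\<dots> = (\<Sum>i\<in>J. phi i * (\<Sum>x<n. L $$ (i, x) * M $$ (x, i)))"
  proof (rule sum.cong[OF refl])
    fix i assume i: "i \<in> J"
    have "(\<Sum>x\<in>I. L $$ (i, x) * M $$ (x, i)) = (\<Sum>x<n. L $$ (i, x) * M $$ (x, i))"
      by (rule sum.mono_neutral_left) (use i I J cL in \<open>auto simp: condT_def\<close>)
    then show "phi i * (\<Sum>x\<in>I. L $$ (i, x) * M $$ (x, i)) = phi i * (\<Sum>x<n. L $$ (i, x) * M $$ (x, i))" by simp
  qed
  also have "\<dots> = (\<Sum>i\<in>J. phi i)" using dLM by simp
  finally show ?thesis .
qed

definition subm :: "nat list \<Rightarrow> complex mat \<Rightarrow> complex mat" where
  "subm xs X = mat (length xs) (length xs) (\<lambda>(a, b). X $$ (xs ! a, xs ! b))"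

lemma det_transport:
  assumes I: "I \<subseteq> {..<n}" and J: "J \<subseteq> {..<n}" and L: "L \<in> carrier_mat n n" and M: "M \<in> carrier_mat n n"
    and LM: "L * M = 1\<^sub>m n" and ML1: "M * L = 1\<^sub>m n" and cL: "condT n I J L" and cM: "condT n J I M"
    and A: "A \<in> carrier_mat n n" and A': "A' \<in> carrier_mat n n" and AL: "A' * L = L * A"
  shows "det (subm (sorted_list_of_set J) A') = det (subm (sorted_list_of_set I) A)"
proof -
  interpret nm n .
  have fI: "finite I" and fJ: "finite J" using I J finite_subset by auto
  let ?lI = "sorted_list_of_set I" and ?lJ = "sorted_list_of_set J"
  have "(\<Sum>x\<in>I. (1::complex)) = (\<Sum>i\<in>J. 1)"
    by (rule trace_eq[OF I J L M LM ML1 cL cM]) auto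
  then have cardIJ: "card I = card J" by simp
  define k where "k = card I"
  have lenI: "length ?lI = k" and lenJ: "length ?lJ = k" unfolding k_def using cardIJ fI fJ by auto
  have inI: "?lI ! c \<in> I" if "c < k" for c using sorted_nth_in[OF fI] that lenI by auto
  have inJ: "?lJ ! c \<in> J" if "c < k" for c using sorted_nth_in[OF fJ] that lenJ by auto
  have ltI: "?lI ! c < n" if "c < k" for c using inI[OF that] I by auto
  have ltJ: "?lJ ! c < n" if "c < k" for c using inJ[OF that] J by auto
  define LJI where "LJI = mat k k (\<lambda>(a, b). L $$ (?lJ ! a, ?lI ! b))"
  define MIJ where "MIJ = mat k k (\<lambda>(a, b). M $$ (?lI ! a, ?lJ ! b))"
  define X where "X = subm ?lI A"
  have cs: "LJI \<in> carrier_mat k k" "MIJ \<in> carrier_mat k k" "X \<in> carrier_mat k k"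
    unfolding LJI_def MIJ_def X_def subm_def lenI by auto
  have A'eq: "A' = L * A * M"
  proof -
    have "A' = A' * (L * M)" using LM A' by (simp add: nsimps)
    also have "\<dots> = (A' * L) * M" using A' L M by (simp add: nsimps)
    finally show ?thesis using AL by simp
  qed
  have LMs: "LJI * MIJ = 1\<^sub>m k"
  proof (rule eq_matI)
    fix a b assume ab: "a < dim_row (1\<^sub>m k :: complex mat)" "b < dim_col (1\<^sub>m k :: complex mat)"
    then have ab': "a < k" "b < k" by auto
    have "(LJI * MIJ) $$ (a, b) = (\<Sum>c<k. L $$ (?lJ ! a, ?lI ! c) * M $$ (?lI ! c, ?lJ ! b))"
      using ab' cs unfolding LJI_def MIJ_def by (simp add: msimp)
    also have "\<dots> = (\<Sum>x\<in>I. L $$ (?lJ ! a, x) * M $$ (x, ?lJ ! b))"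
      using sum_sorted[OF fI, of "\<lambda>x. L $$ (?lJ ! a, x) * M $$ (x, ?lJ ! b)"] lenI by simp
    also have "\<dots> = (\<Sum>x<n. L $$ (?lJ ! a, x) * M $$ (x, ?lJ ! b))"
      by (rule sum.mono_neutral_left) (use I inJ[OF ab'(1)] ltJ[OF ab'(1)] cL in \<open>auto simp: condT_def\<close>)
    also have "\<dots> = (L * M) $$ (?lJ ! a, ?lJ ! b)" using ltJ ab' L M by (simp add: msimp)
    also have "\<dots> = 1\<^sub>m k $$ (a, b)"
    proof -
      have "?lJ ! a = ?lJ ! b \<longleftrightarrow> a = b"
        using nth_eq_iff_index_eq[of ?lJ a b] ab' lenJ by auto
      then show ?thesis using LM ltJ ab' by simp
    qed
    finally show "(LJI * MIJ) $$ (a, b) = 1\<^sub>m k $$ (a, b)" .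
  qed (use cs in auto)
  have subeq: "subm ?lJ A' = LJI * X * MIJ"
  proof (rule eq_matI)
    fix a b assume ab: "a < dim_row (LJI * X * MIJ)" "b < dim_col (LJI * X * MIJ)"
    then have ab': "a < k" "b < k" using cs by auto
    have "(LJI * X * MIJ) $$ (a, b) = (\<Sum>c<k. (\<Sum>e<k. L $$ (?lJ ! a, ?lI ! e) * A $$ (?lI ! e, ?lI ! c)) * M $$ (?lI ! c, ?lJ ! b))"
      using ab' cs unfolding LJI_def MIJ_def X_def subm_def lenI by (simp add: msimp)
    also have "\<dots> = (\<Sum>y\<in>I. (\<Sum>x\<in>I. L $$ (?lJ ! a, x) * A $$ (x, y)) * M $$ (y, ?lJ ! b))"
    proof -
      have inner: "(\<Sum>e<k. L $$ (?lJ ! a, ?lI ! e) * A $$ (?lI ! e, y)) = (\<Sum>x\<in>I. L $$ (?lJ ! a, x) * A $$ (x, y))" for y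
        using sum_sorted[OF fI, of "\<lambda>x. L $$ (?lJ ! a, x) * A $$ (x, y)"] lenI by simp
      show ?thesis unfolding inner
        using sum_sorted[OF fI, of "\<lambda>y. (\<Sum>x\<in>I. L $$ (?lJ ! a, x) * A $$ (x, y)) * M $$ (y, ?lJ ! b)"] lenI by simp
    qed
    also have "\<dots> = (\<Sum>y<n. (\<Sum>x<n. L $$ (?lJ ! a, x) * A $$ (x, y)) * M $$ (y, ?lJ ! b))"
    proof -
      have "(\<Sum>x\<in>I. L $$ (?lJ ! a, x) * A $$ (x, y)) = (\<Sum>x<n. L $$ (?lJ ! a, x) * A $$ (x, y))" for y
        by (rule sum.mono_neutral_left) (use I inJ[OF ab'(1)] ltJ[OF ab'(1)] cL in \<open>auto simp: condT_def\<close>)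
      moreover have "(\<Sum>y\<in>I. (\<Sum>x<n. L $$ (?lJ ! a, x) * A $$ (x, y)) * M $$ (y, ?lJ ! b)) =
          (\<Sum>y<n. (\<Sum>x<n. L $$ (?lJ ! a, x) * A $$ (x, y)) * M $$ (y, ?lJ ! b))"
        by (rule sum.mono_neutral_left) (use I inJ[OF ab'(2)] ltJ[OF ab'(2)] cM in \<open>auto simp: condT_def\<close>)
      ultimately show ?thesis by simp
    qed
    also have "\<dots> = (L * A * M) $$ (?lJ ! a, ?lJ ! b)" using ltJ ab' L M A by (simp add: msimp sum_distrib_left sum_distrib_right mult.assoc, subst sum.swap, simp)
    also have "\<dots> = subm ?lJ A' $$ (a, b)" unfolding subm_def A'eq using ab' lenJ by simp
    finally show "subm ?lJ A' $$ (a, b) = (LJI * X * MIJ) $$ (a, b)" by simp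
  qed (use cs lenJ in \<open>auto simp: subm_def\<close>)
  have "det (LJI * X * MIJ) = det LJI * det X * det MIJ"
    using cs by (simp add: det_mult[of _ k])
  also have "\<dots> = det X * det (LJI * MIJ)" using cs by (simp add: det_mult[of _ k])
  also have "\<dots> = det X" using LMs by simp
  finally show ?thesis using subeq unfolding X_def by simp
qed



context nm begin
lemma canc: "(A :: complex mat) \<in> carrier_mat n n \<Longrightarrow> B \<in> carrier_mat n n \<Longrightarrow> C \<in> carrier_mat n n \<Longrightarrow>
  A * B = 1\<^sub>m n \<Longrightarrow> A * (B * C) = C"
  by (simp add: assoc_n[symmetric] one_left_n)
end

lemma mact_mat_eq: "A \<in> carrier_mat n n \<Longrightarrow> B \<in> carrier_mat n n \<Longrightarrow> C \<in> carrier_mat n n \<Longrightarrow> D \<in> carrier_mat n n \<Longrightarrow>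
   A * B = C * D \<Longrightarrow> mact n A (mact n B b) = mact n C (mact n D b)"
  by (metis mact_mult)

lemma subspace_dep: "fs.subspace {f. dep J f}"
  unfolding fs.subspace_def dep_def by (auto simp: fscale_def, metis+)

locale tset = fgrp n G for n G +
  fixes w :: "nat \<Rightarrow> nat" and W :: "(nat \<Rightarrow> complex) \<Rightarrow> complex" and d :: nat
  assumes GW: "G \<subseteq> G_W n w W" and Wpoly: "poly_fun {..<n} W"
begin

lemma blkG: "g \<in> G \<Longrightarrow> blk n w g" using GW unfolding G_W_def blk_def by auto
lemma Winv: "g \<in> G \<Longrightarrow> W (mact n g a) = W a" using GW unfolding G_W_def by auto

lemma eigG: assumes "g \<in> G" shows "eigendata n w g (eig n w g)"
proof -
  obtain N where N: "0 < N" "g ^\<^sub>m N = 1\<^sub>m n" using finite_order[OF assms] by blast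
  have "\<exists>D. eigendata n w g D" by (rule eig_exists[OF carr[OF assms] blkG[OF assms] N])
  then show ?thesis unfolding eig_def by (rule someI_ex)
qed

abbreviation "P g \<equiv> eigP n w g"
abbreviation "Q g \<equiv> eigQ n w g"
abbreviation "lam g \<equiv> eiglam n w g"

lemma eigD: assumes "g \<in> G"
  shows "P g \<in> carrier_mat n n" "Q g \<in> carrier_mat n n" "P g * Q g = 1\<^sub>m n" "Q g * P g = 1\<^sub>m n"
    "P g * g = diagm n (lam g) * P g" "blk n w (P g)" "blk n w (Q g)"
proof -
  obtain P0 Q0 l0 where e: "eig n w g = (P0, Q0, l0)" by (cases "eig n w g") auto
  have ed: "eigendata n w g (P0, Q0, l0)" using eigG[OF assms] e by simp
  have pq: "P g = P0" "Q g = Q0" "lam g = l0" unfolding eigP_def eigQ_def eiglam_def e by auto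
  show "P g \<in> carrier_mat n n" "Q g \<in> carrier_mat n n" "P g * Q g = 1\<^sub>m n" "Q g * P g = 1\<^sub>m n"
    "P g * g = diagm n (lam g) * P g" "blk n w (P g)"
    using ed unfolding pq eigendata_def diagm_def blk_def by auto
  then show "blk n w (Q g)" using blk_inv by blast
qed

lemma QL: assumes "g \<in> G" shows "Q g * diagm n (lam g) = g * Q g"
proof -
  note e = eigD[OF assms] carr[OF assms]
  have "Q g * diagm n (lam g) = Q g * diagm n (lam g) * (P g * Q g)" using e by (simp add: nsimps)
  also have "\<dots> = Q g * (P g * g) * Q g" using e by (simp add: nsimps)
  also have "\<dots> = g * Q g" using eigD(1-4)[OF assms] carr[OF assms] by (simp add: nsimps canc)
  finally show ?thesis .
qed

lemma fixidx_sub: "fixidx n w g \<subseteq> {..<n}" unfolding fixidx_def by auto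

lemma Wfix_poly: assumes "g \<in> G" shows "poly_fun (fixidx n w g) (Wfix n w W g)"
proof -
  let ?J = "fixidx n w g"
  have fJ: "finite ?J" using fixidx_sub finite_subset by blast
  have comp: "poly_fun ?J (\<lambda>b. mact n (Q g) (\<lambda>i. if i \<in> ?J then b i else 0) i)" if "i \<in> {..<n}" for i
  proof -
    have "mact n (Q g) (\<lambda>i. if i \<in> ?J then b i else 0) i = (\<Sum>l\<in>?J. Q g $$ (i, l) * b l)" for b
    proof -
      have "mact n (Q g) (\<lambda>i. if i \<in> ?J then b i else 0) i = (\<Sum>l<n. Q g $$ (i, l) * (if l \<in> ?J then b l else 0))"
        using that unfolding mact_def by simp
      also have "\<dots> = (\<Sum>l<n. if l \<in> ?J then Q g $$ (i, l) * b l else 0)" by (rule sum.cong) auto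
      also have "\<dots> = (\<Sum>l\<in>?J. Q g $$ (i, l) * b l)" using fixidx_sub by (simp add: sum_if_subset)
      finally show ?thesis .
    qed
    moreover have "poly_fun ?J (\<lambda>b. \<Sum>l\<in>?J. Q g $$ (i, l) * b l)"
    proof (rule poly_fun_sum[OF fJ fJ])
      fix l assume "l \<in> ?J"
      show "poly_fun ?J (\<lambda>a. Q g $$ (i, l) * a l)"
        by (rule poly_fun_mult[OF poly_fun_const poly_fun_var[OF fJ \<open>l \<in> ?J\<close>]])
    qed
    ultimately show ?thesis by simp
  qed
  show ?thesis unfolding Wfix_def by (rule poly_fun_comp[OF fJ Wpoly comp])
qed

end



lemma condT_rowc: "condT n I J L \<Longrightarrow> J \<subseteq> {..<n} \<Longrightarrow> rowc n I J L"
  unfolding condT_def rowc_def by blast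

lemma diag3_entry: "X \<in> carrier_mat n n \<Longrightarrow> i < n \<Longrightarrow> j < n \<Longrightarrow>
  (diagm n a * X * diagm n b) $$ (i, j) = a i * X $$ (i, j) * b j"
proof -
  assume X: "X \<in> carrier_mat n n" and ij: "i < n" "j < n"
  have c: "diagm n a * X \<in> carrier_mat n n" using mult_carrier_mat[OF diagm_carrier X] .
  show ?thesis using mult_diagm_right[OF c ij, of b] mult_diagm_left[OF X ij, of a] by simp
qed

context tset begin

definition "gp g k = k * ginv n G g * ginv n G k"
definition "Lm g k = P (gp g k) * k * Q g"
definition "Mm g k = P g * ginv n G k * Q (gp g k)"

context
  fixes g k assumes g: "g \<in> G" and k: "k \<in> G"
begin

lemma gp_mem: "gp g k \<in> G" unfolding gp_def using g k ginv mult_mem by auto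

lemmas cs = carr[OF g] carr[OF k] carr[OF ginv(1)[OF g]] carr[OF ginv(1)[OF k]]
  eigD(1-4)[OF g] eigD(1-4)[OF gp_mem] ginv(2,3)[OF g] ginv(2,3)[OF k]

lemma LM_carr: "Lm g k \<in> carrier_mat n n" "Mm g k \<in> carrier_mat n n"
  unfolding Lm_def Mm_def using cs by auto

lemma LM1: "Lm g k * Mm g k = 1\<^sub>m n" "Mm g k * Lm g k = 1\<^sub>m n"
  unfolding Lm_def Mm_def using cs by (simp_all add: nsimps canc)

lemma Lrel: "diagm n (lam (gp g k)) * Lm g k * diagm n (lam g) = Lm g k"
proof -
  have "diagm n (lam (gp g k)) * Lm g k * diagm n (lam g) =
     (diagm n (lam (gp g k)) * P (gp g k)) * k * (Q g * diagm n (lam g))"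
    unfolding Lm_def using cs by (simp add: nsimps)
  also have "\<dots> = (P (gp g k) * gp g k) * k * (g * Q g)"
    using eigD(5)[OF gp_mem] QL[OF g] by simp
  also have "\<dots> = Lm g k"
  proof -
    have aux: "X * gp g k * k * (g * Q g) = X * k * Q g" if "X \<in> carrier_mat n n" for X
      unfolding gp_def using cs that by (simp add: nsimps canc)
    show ?thesis unfolding Lm_def by (rule aux) (use eigD(1)[OF gp_mem] in simp)
  qed
  finally show ?thesis .
qed

lemma Mrel: "diagm n (lam g) * Mm g k * diagm n (lam (gp g k)) = Mm g k"
proof -
  have "diagm n (lam g) * Mm g k * diagm n (lam (gp g k)) =
     (diagm n (lam g) * P g) * ginv n G k * (Q (gp g k) * diagm n (lam (gp g k)))"
    unfolding Mm_def using cs by (simp add: nsimps)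
  also have "\<dots> = (P g * g) * ginv n G k * (gp g k * Q (gp g k))"
    using eigD(5)[OF g] QL[OF gp_mem] by simp
  also have "\<dots> = Mm g k"
  proof -
    have aux: "P g * g * ginv n G k * (gp g k * X) = P g * ginv n G k * X" if "X \<in> carrier_mat n n" for X
      unfolding gp_def using cs that by (simp add: nsimps canc)
    show ?thesis unfolding Mm_def by (rule aux) (use eigD(2)[OF gp_mem] in simp)
  qed
  finally show ?thesis .
qed

lemma condL: "condT n (fixidx n w g) (fixidx n w (gp g k)) (Lm g k)"
  unfolding condT_def
proof (intro allI impI)
  fix i j assume ij: "i < n" "j < n" "Lm g k $$ (i, j) \<noteq> 0"
  have "Lm g k $$ (i, j) = lam (gp g k) i * Lm g k $$ (i, j) * lam g j"
    using diag3_entry[OF LM_carr(1) ij(1,2), of "lam (gp g k)" "lam g"] by (simp only: Lrel)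
  then have "Lm g k $$ (i, j) * (lam (gp g k) i * lam g j - 1) = 0" by (simp add: algebra_simps)
  then have "lam (gp g k) i * lam g j = 1" using ij(3) by simp
  then show "i \<in> fixidx n w (gp g k) \<longleftrightarrow> j \<in> fixidx n w g" using ij unfolding fixidx_def by auto
qed

lemma condM: "condT n (fixidx n w (gp g k)) (fixidx n w g) (Mm g k)"
  unfolding condT_def
proof (intro allI impI)
  fix i j assume ij: "i < n" "j < n" "Mm g k $$ (i, j) \<noteq> 0"
  have "Mm g k $$ (i, j) = lam g i * Mm g k $$ (i, j) * lam (gp g k) j"
    using diag3_entry[OF LM_carr(2) ij(1,2), of "lam g" "lam (gp g k)"] by (simp only: Mrel)
  then have "Mm g k $$ (i, j) * (lam g i * lam (gp g k) j - 1) = 0" by (simp add: algebra_simps)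
  then have "lam g i * lam (gp g k) j = 1" using ij(3) by simp
  then show "i \<in> fixidx n w g \<longleftrightarrow> j \<in> fixidx n w (gp g k)" using ij unfolding fixidx_def by auto
qed

lemma blkL: "blk n w (Lm g k)" "blk n w (Mm g k)"
  unfolding Lm_def Mm_def
  using blk_mult cs blkG[OF k] blkG[OF ginv(1)[OF k]] eigD(6,7)[OF g] eigD(6,7)[OF gp_mem]
  by (metis mcn)+

lemma Wfix_tr: "Wfix n w W g = tr n (Lm g k) (Wfix n w W (gp g k))"
proof
  fix b
  let ?I = "fixidx n w g" and ?J = "fixidx n w (gp g k)" and ?L = "Lm g k"
  let ?zI = "\<lambda>b. (\<lambda>i. if i \<in> ?I then b i else 0)" and ?zJ = "\<lambda>b. (\<lambda>i. if i \<in> ?J then b i else 0)"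
  have z: "?zJ (mact n ?L b) = mact n ?L (?zI b)"
  proof
    fix i show "?zJ (mact n ?L b) i = mact n ?L (?zI b) i"
    proof (cases "i < n")
      case True
      show ?thesis
      proof (cases "i \<in> ?J")
        case iJ: True
        have "(\<Sum>l<n. ?L $$ (i, l) * b l) = (\<Sum>l<n. ?L $$ (i, l) * (if l \<in> ?I then b l else 0))"
        proof (rule sum.cong[OF refl])
          fix l assume "l \<in> {..<n}"
          then show "?L $$ (i, l) * b l = ?L $$ (i, l) * (if l \<in> ?I then b l else 0)"
            using condL True iJ unfolding condT_def by (cases "?L $$ (i, l) = 0") auto
        qed
        then show ?thesis using True iJ unfolding mact_def by simp
      next
        case iJ: False
        have "(\<Sum>l<n. ?L $$ (i, l) * (if l \<in> ?I then b l else 0)) = 0"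
        proof (rule sum.neutral, intro ballI)
          fix l assume "l \<in> {..<n}"
          then show "?L $$ (i, l) * (if l \<in> ?I then b l else 0) = 0"
            using condL True iJ unfolding condT_def by (cases "?L $$ (i, l) = 0") auto
        qed
        then show ?thesis using True iJ unfolding mact_def by simp
      qed
    qed (simp add: mact_def fixidx_def)
  qed
  have "tr n ?L (Wfix n w W (gp g k)) b = W (mact n (Q (gp g k)) (mact n ?L (?zI b)))"
    unfolding tr_def Wfix_def z ..
  also have "\<dots> = W (mact n k (mact n (Q g) (?zI b)))"
  proof -
    have "Q (gp g k) * ?L = k * Q g" unfolding Lm_def using cs by (simp add: nsimps canc)
    then show ?thesis using mact_mat_eq[of "Q (gp g k)" n ?L k "Q g"] cs LM_carr by simp
  qed
  also have "\<dots> = Wfix n w W g b" unfolding Wfix_def using Winv[OF k] by simp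
  finally show "Wfix n w W g b = tr n ?L (Wfix n w W (gp g k)) b" by simp
qed

lemma det_fix_subm: "det_fix n w x h = det (subm (sorted_list_of_set (fixidx n w x)) (ymat n w x h))"
  unfolding det_fix_def subm_def Let_def ..

lemma cent:
  assumes h: "h \<in> centralizer G g"
  shows "k * h * ginv n G k \<in> centralizer G (gp g k)"
    "ymat n w (gp g k) (k * h * ginv n G k) * Lm g k = Lm g k * ymat n w g h"
    "det_fix n w (gp g k) (k * h * ginv n G k) = det_fix n w g h"
proof -
  have hG: "h \<in> G" and hg: "h * g = g * h" using h unfolding centralizer_def by auto
  have hc: "h \<in> carrier_mat n n" using carr[OF hG] .
  let ?gi = "ginv n G g" and ?ki = "ginv n G k"
  have hgi: "h * ?gi = ?gi * h"
  proof -
    have "?gi * h = ?gi * (h * g) * ?gi" using cs hc by (simp add: nsimps)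
    also have "\<dots> = ?gi * (g * h) * ?gi" using hg by simp
    also have "\<dots> = h * ?gi" using cs hc by (simp add: nsimps canc)
    finally show ?thesis by simp
  qed
  have mem: "k * h * ?ki \<in> G" using mult_mem hG k ginv by auto
  have "k * h * ?ki * gp g k = k * (h * ?gi) * ?ki" unfolding gp_def using cs hc by (simp add: nsimps canc)
  also have "\<dots> = k * (?gi * h) * ?ki" using hgi by simp
  also have "\<dots> = gp g k * (k * h * ?ki)" unfolding gp_def using cs hc by (simp add: nsimps canc)
  finally show "k * h * ?ki \<in> centralizer G (gp g k)" unfolding centralizer_def using mem by simp
  show AL: "ymat n w (gp g k) (k * h * ?ki) * Lm g k = Lm g k * ymat n w g h"
    unfolding ymat_def Lm_def using cs hc by (simp add: nsimps canc)
  show "det_fix n w (gp g k) (k * h * ?ki) = det_fix n w g h"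
    unfolding det_fix_subm
    by (rule det_transport[OF fixidx_sub fixidx_sub LM_carr LM1 condL condM _ _ AL])
      (use cs hc in \<open>auto simp: ymat_def\<close>)
qed

lemma rowL: "rowc n (fixidx n w g) (fixidx n w (gp g k)) (Lm g k)"
  by (rule condT_rowc[OF condL fixidx_sub])

lemma Rc_tr: "f \<in> Rc n w d (gp g k) c \<Longrightarrow> tr n (Lm g k) f \<in> Rc n w d g c"
  unfolding Rc_def using tr_poly[OF rowL fixidx_sub fixidx_sub] tr_charge[OF blkL(1)] by auto

lemma jac_tr: "f \<in> jac_ideal (fixidx n w (gp g k)) (Wfix n w W (gp g k)) \<Longrightarrow>
   tr n (Lm g k) f \<in> jac_ideal (fixidx n w g) (Wfix n w W g)"
  using tr_jac[OF fixidx_sub fixidx_sub LM_carr LM1(1) rowL Wfix_poly[OF gp_mem]] Wfix_tr by simp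

lemma Jc_tr: "f \<in> Jc n w d W (gp g k) c \<Longrightarrow> tr n (Lm g k) f \<in> Jc n w d W g c"
  unfolding Jc_def using Rc_tr jac_tr by auto

lemma InvPre_tr: assumes f: "f \<in> InvPre n w d W G (gp g k) c"
  shows "tr n (Lm g k) f \<in> InvPre n w d W G g c"
proof -
  have fR: "f \<in> Rc n w d (gp g k) c" using f unfolding InvPre_def by auto
  have "(\<lambda>b. det_fix n w g h * tr n (Lm g k) f (mact n (ymat n w g h) b) - tr n (Lm g k) f b)
     \<in> jac_ideal (fixidx n w g) (Wfix n w W g)" if h: "h \<in> centralizer G g" for h
  proof -
    let ?h' = "k * h * ginv n G k"
    note c = cent[OF h]
    have hG: "h \<in> G" using h unfolding centralizer_def by auto
    have e: "(\<lambda>b. det_fix n w g h * tr n (Lm g k) f (mact n (ymat n w g h) b) - tr n (Lm g k) f b) =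
      tr n (Lm g k) (\<lambda>b. det_fix n w (gp g k) ?h' * f (mact n (ymat n w (gp g k) ?h') b) - f b)"
    proof
      fix b
      have "mact n (Lm g k) (mact n (ymat n w g h) b) = mact n (ymat n w (gp g k) ?h') (mact n (Lm g k) b)"
        by (rule mact_mat_eq) (use c(2) LM_carr cs carr[OF hG] mult_mem[OF mult_mem[OF k hG] ginv(1)[OF k]] gp_mem
            in \<open>auto simp: ymat_def carr\<close>)
      then show "det_fix n w g h * tr n (Lm g k) f (mact n (ymat n w g h) b) - tr n (Lm g k) f b =
        tr n (Lm g k) (\<lambda>b. det_fix n w (gp g k) ?h' * f (mact n (ymat n w (gp g k) ?h') b) - f b) b"
        unfolding tr_def c(3) by simp
    qed
    have "(\<lambda>b. det_fix n w (gp g k) ?h' * f (mact n (ymat n w (gp g k) ?h') b) - f b)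
       \<in> jac_ideal (fixidx n w (gp g k)) (Wfix n w W (gp g k))"
      using f c(1) unfolding InvPre_def by auto
    then show ?thesis unfolding e by (rule jac_tr)
  qed
  then show ?thesis using Rc_tr[OF fR] unfolding InvPre_def by auto
qed

end

end



context tset begin

lemma ginv_one: "ginv n G (1\<^sub>m n) = 1\<^sub>m n" by (rule ginv_eq) (auto simp: one_mem)

lemma gp_swap: assumes g: "g \<in> G" and k: "k \<in> G"
  shows "gp (gp g k) (ginv n G k) = g"
proof -
  have gk: "ginv n G (gp g k) = k * g * ginv n G k"
    unfolding gp_def using g k ginv ginv_mult mult_mem ginv_ginv by (simp add: assoc_n carr)
  show ?thesis unfolding gp_def[of "gp g k"] gk using ginv_ginv[OF k] carr ginv g k
    by (simp add: nsimps canc)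
qed

lemma LM_swap: assumes g: "g \<in> G" and k: "k \<in> G"
  shows "Lm (gp g k) (ginv n G k) = Mm g k" "Mm (gp g k) (ginv n G k) = Lm g k"
  unfolding Lm_def Mm_def gp_swap[OF g k] ginv_ginv[OF k] by auto

lemma tr_bij: assumes g: "g \<in> G" and k: "k \<in> G"
  and into1: "\<And>f. f \<in> X' \<Longrightarrow> tr n (Lm g k) f \<in> X"
  and into2: "\<And>f. f \<in> X \<Longrightarrow> tr n (Mm g k) f \<in> X'"
  and dX: "\<And>f. f \<in> X \<Longrightarrow> dep (fixidx n w g) f"
  and dX': "\<And>f. f \<in> X' \<Longrightarrow> dep (fixidx n w (gp g k)) f"
  shows "cdim X = cdim X'"
proof -
  let ?L = "Lm g k" and ?M = "Mm g k" and ?J = "fixidx n w (gp g k)"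
  have img: "tr n ?L ` X' = X"
  proof
    show "tr n ?L ` X' \<subseteq> X" using into1 by auto
    show "X \<subseteq> tr n ?L ` X'"
    proof
      fix f assume f: "f \<in> X"
      have "tr n ?L (tr n ?M f) = f"
        by (rule tr_inv[OF LM_carr(2)[OF g k] LM_carr(1)[OF g k] LM1(2)[OF g k] dX[OF f] fixidx_sub])
      then show "f \<in> tr n ?L ` X'" using into2[OF f] by (metis image_eqI)
    qed
  qed
  have sp: "fs.span X' \<subseteq> {f. dep ?J f}"
    by (rule fs.span_minimal) (use dX' subspace_dep in auto)
  have inj: "inj_on (tr n ?L) (fs.span X')"
  proof (rule inj_on_subset[OF _ sp], rule inj_onI)
    fix f1 f2 assume f: "f1 \<in> {f. dep ?J f}" "f2 \<in> {f. dep ?J f}" and e: "tr n ?L f1 = tr n ?L f2"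
    have "f1 = tr n ?M (tr n ?L f1)"
      using tr_inv[OF LM_carr(1)[OF g k] LM_carr(2)[OF g k] LM1(1)[OF g k] _ fixidx_sub] f by simp
    also have "\<dots> = f2" unfolding e
      using tr_inv[OF LM_carr(1)[OF g k] LM_carr(2)[OF g k] LM1(1)[OF g k] _ fixidx_sub] f by simp
    finally show "f1 = f2" .
  qed
  show ?thesis using cdim_transport[OF tr_add tr_scale inj] img by simp
qed

lemma Hdim_eq: assumes g: "g \<in> G" and k: "k \<in> G"
  shows "Hdim n w d W G (gp g k) c = Hdim n w d W G g c"
proof -
  have k': "ginv n G k \<in> G" using ginv k by auto
  have g': "gp g k \<in> G" using gp_mem[OF g k] .
  have "cdim (InvPre n w d W G g c) = cdim (InvPre n w d W G (gp g k) c)"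
  proof (rule tr_bij[OF g k])
    show "\<And>f. f \<in> InvPre n w d W G (gp g k) c \<Longrightarrow> tr n (Lm g k) f \<in> InvPre n w d W G g c"
      by (rule InvPre_tr[OF g k])
    show "tr n (Mm g k) f \<in> InvPre n w d W G (gp g k) c" if "f \<in> InvPre n w d W G g c" for f
      using InvPre_tr[OF g' k', of f c] that unfolding gp_swap[OF g k] LM_swap[OF g k] by simp
  qed (auto simp: InvPre_def Rc_def intro: poly_fun_dep)
  moreover have "cdim (Jc n w d W g c) = cdim (Jc n w d W (gp g k) c)"
  proof (rule tr_bij[OF g k])
    show "\<And>f. f \<in> Jc n w d W (gp g k) c \<Longrightarrow> tr n (Lm g k) f \<in> Jc n w d W g c"
      by (rule Jc_tr[OF g k])
    show "tr n (Mm g k) f \<in> Jc n w d W (gp g k) c" if "f \<in> Jc n w d W g c" for f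
      using Jc_tr[OF g' k', of f c] that unfolding gp_swap[OF g k] LM_swap[OF g k] by simp
  qed (auto simp: Jc_def Rc_def intro: poly_fun_dep)
  ultimately show ?thesis unfolding Hdim_def by simp
qed

lemma shift_eq: assumes g: "g \<in> G" and k: "k \<in> G"
  shows "shift n w d (gp g k) = shift n w d g"
proof -
  let ?I = "fixidx n w g" and ?J = "fixidx n w (gp g k)"
  have "(\<Sum>x\<in>?I. (of_nat (w x) :: complex)) = (\<Sum>i\<in>?J. of_nat (w i))"
    by (rule trace_eq[OF fixidx_sub fixidx_sub LM_carr[OF g k] LM1[OF g k] condL[OF g k] condM[OF g k]])
      (use blkL(2)[OF g k] in \<open>auto simp: blk_def\<close>)
  then have "of_nat (\<Sum>x\<in>?I. w x) = (of_nat (\<Sum>i\<in>?J. w i) :: complex)" by simp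
  then have eq: "(\<Sum>x\<in>?I. w x) = (\<Sum>i\<in>?J. w i)" using of_nat_eq_iff by blast
  have sh: "shift n w d x = ((\<Sum>i<n. real (w i)) - real (\<Sum>i\<in>fixidx n w x. w i)) / real d" for x
  proof -
    have s: "{i. i < n \<and> eiglam n w x i \<noteq> 1} = {..<n} - fixidx n w x" unfolding fixidx_def by auto
    have "shift n w d x = (\<Sum>i\<in>{..<n} - fixidx n w x. real (w i)) / real d"
      unfolding shift_def s by (simp add: sum_divide_distrib)
    also have "\<dots> = ((\<Sum>i<n. real (w i)) - real (\<Sum>i\<in>fixidx n w x. w i)) / real d"
      using sum_diff[OF finite_lessThan fixidx_sub, of "\<lambda>i. real (w i)"] by simp
    finally show ?thesis .
  qed
  show ?thesis unfolding sh eq ..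
qed

lemma age_conj: assumes x: "x \<in> G" and k: "k \<in> G" shows "age (k * x * ginv n G k) = age x"
proof -
  have "similar_mat (k * x * ginv n G k) x"
    unfolding similar_mat_def similar_mat_wit_def Let_def
  proof (rule exI[of _ k], rule exI[of _ "ginv n G k"])
    have c: "x \<in> carrier_mat n n" "k \<in> carrier_mat n n" "ginv n G k \<in> carrier_mat n n"
      using carr[OF x] carr[OF k] carr[OF ginv(1)[OF k]] by auto
    have d: "dim_row (k * x * ginv n G k) = n" using c by simp
    show "{k * x * ginv n G k, x, k, ginv n G k} \<subseteq> carrier_mat (dim_row (k * x * ginv n G k)) (dim_row (k * x * ginv n G k)) \<and>
      k * ginv n G k = 1\<^sub>m (dim_row (k * x * ginv n G k)) \<and> ginv n G k * k = 1\<^sub>m (dim_row (k * x * ginv n G k)) \<and>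
      k * x * ginv n G k = k * x * ginv n G k"
      unfolding d using c ginv[OF k] by simp
  qed
  then have "char_poly (k * x * ginv n G k) = char_poly x" by (rule char_poly_similar)
  then show ?thesis unfolding age_def by simp
qed

end



context tset begin

definition "cj a b \<longleftrightarrow> (\<exists>k\<in>G. a = k * b * ginv n G k)"

lemma cj_refl: "a \<in> G \<Longrightarrow> cj a a"
proof -
  assume a: "a \<in> G"
  have "a = 1\<^sub>m n * a * ginv n G (1\<^sub>m n)" unfolding ginv_one using carr[OF a] by (simp add: nsimps)
  then show ?thesis unfolding cj_def using one_mem by blast
qed

lemma cj_sym: assumes "a \<in> G" "b \<in> G" "cj a b" shows "cj b a"
proof -
  obtain k where k: "k \<in> G" "a = k * b * ginv n G k" using assms unfolding cj_def by blast
  have "b = ginv n G k * a * ginv n G (ginv n G k)"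
    unfolding k(2) ginv_ginv[OF k(1)] using carr ginv k(1) assms by (simp add: nsimps canc)
  then show ?thesis unfolding cj_def using ginv(1)[OF k(1)] by blast
qed

lemma cj_trans: assumes "a \<in> G" "b \<in> G" "c \<in> G" "cj a b" "cj b c" shows "cj a c"
proof -
  obtain k where k: "k \<in> G" "a = k * b * ginv n G k" using assms unfolding cj_def by blast
  obtain l where l: "l \<in> G" "b = l * c * ginv n G l" using assms unfolding cj_def by blast
  have "a = (k * l) * c * ginv n G (k * l)"
    unfolding k(2) l(2) ginv_mult[OF k(1) l(1)] using carr ginv k(1) l(1) assms by (simp add: nsimps)
  then show ?thesis unfolding cj_def using mult_mem[OF k(1) l(1)] by blast
qed

definition "rep x = (SOME y. y \<in> G \<and> cj x y)"

lemma rep: "x \<in> G \<Longrightarrow> rep x \<in> G \<and> cj x (rep x)"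
  unfolding rep_def by (rule someI_ex) (use cj_refl in blast)

lemma rep_cong: assumes "x \<in> G" "y \<in> G" "cj x y" shows "rep x = rep y"
proof -
  have "{z. z \<in> G \<and> cj x z} = {z. z \<in> G \<and> cj y z}"
    using cj_trans cj_sym assms by blast
  then show ?thesis unfolding rep_def by (metis (no_types, lifting) mem_Collect_eq)
qed

lemma reps_exist: "\<exists>S. conj_reps n G S"
proof (rule exI[of _ "rep ` G"])
  show "conj_reps n G (rep ` G)" unfolding conj_reps_def
  proof (intro conjI ballI)
    show "rep ` G \<subseteq> G" using rep by auto
    fix g assume g: "g \<in> G"
    show "\<exists>!s. s \<in> rep ` G \<and> (\<exists>k\<in>G. g = k * s * ginv n G k)"
    proof (rule ex1I[of _ "rep g"])
      show "rep g \<in> rep ` G \<and> (\<exists>k\<in>G. g = k * rep g * ginv n G k)" using rep[OF g] g unfolding cj_def by auto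
      fix s assume s: "s \<in> rep ` G \<and> (\<exists>k\<in>G. g = k * s * ginv n G k)"
      then obtain x where x: "x \<in> G" "s = rep x" by blast
      have sG: "s \<in> G" using rep x by auto
      have "cj g s" using s unfolding cj_def by blast
      have "rep s = rep x" using rep_cong[OF sG x(1)] cj_sym[OF x(1) sG] rep[OF x(1)] x(2) by simp
      also have "rep s = rep g" using rep_cong[OF g sG \<open>cj g s\<close>] by simp
      finally show "s = rep g" using x(2) by simp
    qed
  qed
qed

definition "SS = (SOME S. conj_reps n G S)"

lemma SS: "conj_reps n G SS" unfolding SS_def using reps_exist by (rule someI_ex)

definition "tau s = (THE t. t \<in> SS \<and> (\<exists>k\<in>G. ginv n G s = k * t * ginv n G k))"

lemma SS_sub: "SS \<subseteq> G" using SS unfolding conj_reps_def by auto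

lemma tau: assumes s: "s \<in> SS"
  shows "tau s \<in> SS" "\<exists>k\<in>G. tau s = gp s k"
proof -
  have sG: "s \<in> G" using s SS_sub by auto
  have ex1: "\<exists>!t. t \<in> SS \<and> (\<exists>k\<in>G. ginv n G s = k * t * ginv n G k)"
    using SS ginv(1)[OF sG] unfolding conj_reps_def by blast
  have t: "tau s \<in> SS \<and> (\<exists>k\<in>G. ginv n G s = k * tau s * ginv n G k)"
    unfolding tau_def by (rule theI'[OF ex1])
  then show "tau s \<in> SS" by simp
  obtain k where k: "k \<in> G" "ginv n G s = k * tau s * ginv n G k" using t by blast
  have tG: "tau s \<in> G" using t SS_sub by auto
  have "tau s = ginv n G k * ginv n G s * ginv n G (ginv n G k)"
    unfolding k(2) ginv_ginv[OF k(1)] using carr ginv k(1) tG by (simp add: nsimps canc)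
  then show "\<exists>k\<in>G. tau s = gp s k" unfolding gp_def using ginv(1)[OF k(1)] by blast
qed

lemma tau_tau: assumes s: "s \<in> SS" shows "tau (tau s) = s"
proof -
  have sG: "s \<in> G" using s SS_sub by auto
  obtain k where k: "k \<in> G" "tau s = gp s k" using tau(2)[OF s] by blast
  have ex1: "\<exists>!t. t \<in> SS \<and> (\<exists>k\<in>G. ginv n G (tau s) = k * t * ginv n G k)"
    using SS ginv(1) tau(1)[OF s] SS_sub unfolding conj_reps_def by blast
  have "ginv n G (tau s) = k * s * ginv n G k"
    unfolding k(2) gp_def using ginv_mult ginv_ginv mult_mem ginv k sG carr by (simp add: assoc_n)
  then have "s \<in> SS \<and> (\<exists>k\<in>G. ginv n G (tau s) = k * s * ginv n G k)" using s k(1) by blast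
  then show ?thesis unfolding tau_def[of "tau s"] using the1_equality[OF ex1] by blast
qed

definition "Fs s p q = (if q - p = age (ginv n G s) - age s then Hdim n w d W G s (p - age s + shift n w d s) else 0)"

lemma Fs_tau: assumes s: "s \<in> SS" shows "Fs (tau s) p q = Fs s q p"
proof -
  have sG: "s \<in> G" using s SS_sub by auto
  obtain k where k: "k \<in> G" "tau s = gp s k" using tau(2)[OF s] by blast
  have a1: "age (tau s) = age (ginv n G s)" unfolding k(2) gp_def by (rule age_conj[OF ginv(1)[OF sG] k(1)])
  have gt: "ginv n G (tau s) = k * s * ginv n G k"
    unfolding k(2) gp_def using ginv_mult ginv_ginv mult_mem ginv k sG carr by (simp add: assoc_n)
  have a2: "age (ginv n G (tau s)) = age s" unfolding gt by (rule age_conj[OF sG k(1)])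
  have sh: "shift n w d (tau s) = shift n w d s" unfolding k(2) by (rule shift_eq[OF sG k(1)])
  have hd: "Hdim n w d W G (tau s) c = Hdim n w d W G s c" for c unfolding k(2) by (rule Hdim_eq[OF sG k(1)])
  show ?thesis
  proof (cases "q - p = age s - age (ginv n G s)")
    case True
    then have e: "p - age (ginv n G s) + shift n w d s = q - age s + shift n w d s" by simp
    have c2: "p - q = age (ginv n G s) - age s" using True by simp
    show ?thesis unfolding Fs_def a1 a2 sh hd by (simp only: if_P[OF True] if_P[OF c2] e)
  next
    case False
    then have c2: "\<not> (p - q = age (ginv n G s) - age s)" by simp
    show ?thesis unfolding Fs_def a1 a2 sh hd by (simp only: if_not_P[OF False] if_not_P[OF c2])
  qed
qed

lemma hpq_sym: "hpq n w d W G p q = hpq n w d W G q p"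
proof -
  have h: "hpq n w d W G p q = (\<Sum>s\<in>SS. Fs s p q)" for p q
    unfolding hpq_def Fs_def SS_def ..
  have bij: "bij_betw tau SS SS"
    by (rule bij_betwI[of _ _ _ tau]) (auto simp: tau tau_tau)
  have "(\<Sum>s\<in>SS. Fs s q p) = (\<Sum>s\<in>SS. Fs (tau s) p q)" using Fs_tau by simp
  also have "\<dots> = (\<Sum>s\<in>SS. Fs s p q)" by (rule sum.reindex_bij_betw[OF bij])
  finally show ?thesis unfolding h by simp
qed

end

theorem corollary5p5:
  fixes n d :: nat and w :: "nat \<Rightarrow> nat" and W :: "(nat \<Rightarrow> complex) \<Rightarrow> complex"
    and G :: "complex mat set"
  assumes "quasihomogeneous n w d W"
    and "nondegenerate n W"
    and "finite_mat_group n G"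
    and "G \<subseteq> G_W n w W"
  shows "\<forall>p q :: rat. hpq n w d W G (of_rat p) (of_rat q) = hpq n w d W G (of_rat q) (of_rat p)"
proof -
  interpret tset n G w W d
    by unfold_locales (use assms in \<open>auto simp: quasihomogeneous_def\<close>)
  show ?thesis using hpq_sym by blast
qed

end
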